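(* Let $S=\{z_1,\dots,z_n\}$ be fixed, $f:\mathbb R^d\times\mathcal Z\to\mathbb R_+$ differentiable in $\mathbf w$, and assume $F_S(\mathbf w)=\frac1n\sum_i f(\mathbf w;z_i)$ is $L$-smooth. Let $\alpha\in(1,2]$, $G>0$ and assume at every iterate $\mathbf w_t$ of clipped SGDM (defined in the context) that $\mathbb E_{j_t}[\|\nabla f(\mathbf w_t;z_{j_t})\|^\alpha]\le G^\alpha$. Choose parameters $1-\gamma=s\,T^{-\frac{\alpha}{3\alpha-2}}$, $\tau_1=\frac{pG}{(1-\gamma)^{1/\alpha}}$, $\eta_t=\eta=q\,T^{-\frac{\alpha}{3\alpha-2}}$ and $\tau_2=r\,T^{-\frac{\alpha-1}{3\alpha-2}}$ for positive constants $p,s,q,r$ with $1-\gamma\le 1$. Then there is a constant $C$ not depending on $T$ or $\delta$ such that for any $\delta\in(0,1)$, with probability at least $1-\delta$, $$\frac1T\sum_{t=1}^T\|\nabla F_S(\mathbf w_t)\|\le C\,\frac{\log(T/\delta)}{T^{\frac{\alpha-1}{3\alpha-2}}}.$$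
   Context: The clipping operator is $\mathrm{clip}_\tau(g)=\frac{g}{\|g\|}\min\{\tau,\|g\|\}$. Clipped SGDM with momentum parameter $\gamma\in[0,1)$ and clipping parameters $\tau_1,\tau_2>0$: set $\mathbf w_1=0$, $\mathbf m_0=0$; for $t=1,\dots,T$, draw $j_t$ uniformly from $\{1,\dots,n\}$ independently of the past, set $\nabla\bar f(\mathbf w_t;z_{j_t})=\mathrm{clip}_{\tau_1}(\nabla f(\mathbf w_t;z_{j_t}))$, $\mathbf m_t=\gamma\mathbf m_{t-1}+(1-\gamma)\nabla\bar f(\mathbf w_t;z_{j_t})$, $\bar{\mathbf m}_t=\mathrm{clip}_{\tau_2}(\mathbf m_t)$, and $\mathbf w_{t+1}=\mathbf w_t-\eta_t\bar{\mathbf m}_t$. $\mathbb E_{j_t}$ is the conditional expectation over $j_t$. *)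

theory Defs
  imports "HOL-Analysis.Analysis" "HOL-Probability.Probability"
begin

text \<open>Clipping operator: clip tau g = (g / norm g) * min tau (norm g); with the
  convention x / 0 = 0 this gives clip tau 0 = 0.\<close>
definition clip :: "real \<Rightarrow> 'a::real_normed_vector \<Rightarrow> 'a" where
  "clip \<tau> g = (min \<tau> (norm g) / norm g) *\<^sub>R g"

text \<open>State of clipped SGDM. gf w z is the gradient of f(.;z) at w, zs the data,
  js the sampled index sequence (js t = j_t).
  sgdm_state ... 0 = (w_1, m_0) = (0, 0) and sgdm_state ... k = (w_(k+1), m_k).\<close>
fun sgdm_state ::
  "('a::real_normed_vector \<Rightarrow> 'z \<Rightarrow> 'a) \<Rightarrow> (nat \<Rightarrow> 'z) \<Rightarrow> real \<Rightarrow> real \<Rightarrow> real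
   \<Rightarrow> (nat \<Rightarrow> real) \<Rightarrow> (nat \<Rightarrow> nat) \<Rightarrow> nat \<Rightarrow> 'a \<times> 'a" where
  "sgdm_state gf zs \<gamma> \<tau>1 \<tau>2 \<eta> js 0 = (0, 0)"
| "sgdm_state gf zs \<gamma> \<tau>1 \<tau>2 \<eta> js (Suc k) =
     (let (w, m) = sgdm_state gf zs \<gamma> \<tau>1 \<tau>2 \<eta> js k;
          t = Suc k;
          gbar = clip \<tau>1 (gf w (zs (js t)));
          m' = \<gamma> *\<^sub>R m + (1 - \<gamma>) *\<^sub>R gbar;
          w' = w - \<eta> t *\<^sub>R clip \<tau>2 m'
      in (w', m'))"

definition sgdm_iter ::
  "('a::real_normed_vector \<Rightarrow> 'z \<Rightarrow> 'a) \<Rightarrow> (nat \<Rightarrow> 'z) \<Rightarrow> real \<Rightarrow> real \<Rightarrow> real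
   \<Rightarrow> (nat \<Rightarrow> real) \<Rightarrow> (nat \<Rightarrow> nat) \<Rightarrow> nat \<Rightarrow> 'a" where
  "sgdm_iter gf zs \<gamma> \<tau>1 \<tau>2 \<eta> js t = fst (sgdm_state gf zs \<gamma> \<tau>1 \<tau>2 \<eta> js (t - 1))"

definition index_law :: "nat \<Rightarrow> nat \<Rightarrow> (nat \<Rightarrow> nat) pmf" where
  "index_law n T = Pi_pmf {1..T} 0 (\<lambda>_. pmf_of_set {1..n})"

end

theory Submission
  imports Defs
begin


lemma set_index_law:
  assumes "n \<ge> 1"
  shows "f \<in> set_pmf (index_law n T) \<longleftrightarrow> (\<forall>x. (x \<in> {1..T} \<longrightarrow> f x \<in> {1..n}) \<and> (x \<notin> {1..T} \<longrightarrow> f x = 0))"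
  using assms by (auto simp: index_law_def set_Pi_pmf PiE_dflt_def)

lemma index_law_Suc:
  "index_law n (Suc T) = map_pmf (\<lambda>(y,f). f(Suc T:=y)) (pair_pmf (pmf_of_set {1..n}) (index_law n T))"
proof -
  have "{1..Suc T} = insert (Suc T) {1..T}" by auto
  thus ?thesis unfolding index_law_def by (simp add: Pi_pmf_insert)
qed

lemma hoeff_unif:
  fixes h :: "nat \<Rightarrow> real"
  assumes n: "n \<ge> 1" and s0: "(\<Sum>y\<in>{1..n}. h y) = 0"
    and b: "\<And>y. y \<in> {1..n} \<Longrightarrow> \<bar>h y\<bar> \<le> c" and l: "l \<ge> 0"
  shows "(\<integral>\<^sup>+y. ennreal (exp (l * h y)) \<partial>measure_pmf (pmf_of_set {1..n})) \<le> ennreal (exp (l^2 * c^2 / 2))"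
proof (cases "l = 0")
  case True
  thus ?thesis by (simp add: measure_pmf.emeasure_space_1)
next
  case False
  hence lp: "l > 0" using l by simp
  have ne: "{1..n} \<noteq> {}" using n by auto
  interpret interval_bounded_random_variable "measure_pmf (pmf_of_set {1..n})" h "-c" c
  proof unfold_locales
    show "AE x in measure_pmf (pmf_of_set {1..n}). h x \<in> {- c..c}"
      using b ne by (fastforce simp: AE_measure_pmf_iff abs_le_iff)
  qed simp
  have "measure_pmf.expectation (pmf_of_set {1..n}) h = 0"
    using ne s0 by (simp add: integral_pmf_of_set)
  from Hoeffdings_lemma_nn_integral_0[OF lp this]
  have H: "(\<integral>\<^sup>+y. ennreal (exp (l * h y)) \<partial>measure_pmf (pmf_of_set {1..n})) \<le> ennreal (exp (l\<^sup>2 * (c - - c)\<^sup>2 / 8))" .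
  have "l\<^sup>2 * (c - - c)\<^sup>2 / 8 = l^2 * c^2 / 2" by (simp add: power2_eq_square algebra_simps)
  with H show ?thesis by (simp only:)
qed

lemma upd_in_index_law:
  assumes "n \<ge> 1" "f \<in> set_pmf (index_law n T)" "y \<in> {1..n}"
  shows "f(Suc T := y) \<in> set_pmf (index_law n (Suc T))"
proof -
  have f: "\<forall>x. (x \<in> {1..T} \<longrightarrow> f x \<in> {1..n}) \<and> (x \<notin> {1..T} \<longrightarrow> f x = 0)"
    using assms(2) unfolding set_index_law[OF assms(1)] .
  have "\<forall>x. (x \<in> {1..Suc T} \<longrightarrow> (f(Suc T := y)) x \<in> {1..n}) \<and> (x \<notin> {1..Suc T} \<longrightarrow> (f(Suc T := y)) x = 0)"
  proof
    fix x show "(x \<in> {1..Suc T} \<longrightarrow> (f(Suc T := y)) x \<in> {1..n}) \<and> (x \<notin> {1..Suc T} \<longrightarrow> (f(Suc T := y)) x = 0)"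
    proof (cases "x = Suc T")
      case True thus ?thesis using assms(3) by simp
    next
      case False
      hence "(x \<in> {1..Suc T}) = (x \<in> {1..T})" by auto
      thus ?thesis using f False by simp
    qed
  qed
  thus ?thesis unfolding set_index_law[OF assms(1)] .
qed

lemma mgf_bound:
  fixes X :: "nat \<Rightarrow> (nat \<Rightarrow> nat) \<Rightarrow> real" and a :: "nat \<Rightarrow> real"
  assumes n: "n \<ge> 1"
    and dep: "\<And>k f g. (\<And>i. i \<le> k \<Longrightarrow> f i = g i) \<Longrightarrow> X k f = X k g"
    and mean0: "\<And>k f. 1 \<le> k \<Longrightarrow> k \<le> T \<Longrightarrow> f \<in> set_pmf (index_law n (k - 1)) \<Longrightarrow> (\<Sum>y\<in>{1..n}. X k (f(k:=y))) = 0"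
    and bnd: "\<And>k f. 1 \<le> k \<Longrightarrow> k \<le> T \<Longrightarrow> f \<in> set_pmf (index_law n k) \<Longrightarrow> \<bar>X k f\<bar> \<le> c"
    and a: "\<And>k. a k \<ge> 0"
  shows "(\<integral>\<^sup>+f. ennreal (exp (\<Sum>k=1..T. a k * X k f)) \<partial>measure_pmf (index_law n T))
           \<le> ennreal (exp ((\<Sum>k=1..T. (a k)^2) * c^2 / 2))"
  using mean0 bnd
proof (induction T)
  case 0
  thus ?case by (simp add: index_law_def)
next
  case (Suc T)
  let ?U = "pmf_of_set {1..n}"
  let ?P = "index_law n T"
  let ?S = "\<lambda>f. \<Sum>k=1..T. a k * X k f"
  let ?K = "exp ((a (Suc T))^2 * c^2 / 2)"
  have IH: "(\<integral>\<^sup>+f. ennreal (exp (?S f)) \<partial>measure_pmf ?P) \<le> ennreal (exp ((\<Sum>k=1..T. (a k)^2) * c^2 / 2))"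
    by (rule Suc.IH) (use Suc.prems in auto)
  have "(\<integral>\<^sup>+f. ennreal (exp (\<Sum>k=1..Suc T. a k * X k f)) \<partial>measure_pmf (index_law n (Suc T)))
      = (\<integral>\<^sup>+f. (\<integral>\<^sup>+y. ennreal (exp (\<Sum>k=1..Suc T. a k * X k (f(Suc T := y)))) \<partial>measure_pmf ?U) \<partial>measure_pmf ?P)"
    unfolding index_law_Suc by (subst pair_commute_pmf) (simp add: nn_integral_pair_pmf' case_prod_beta)
  also have "\<dots> \<le> (\<integral>\<^sup>+f. ennreal (exp (?S f)) * ennreal ?K \<partial>measure_pmf ?P)"
  proof (intro nn_integral_mono_AE, unfold AE_measure_pmf_iff, intro ballI)
    fix f assume f: "f \<in> set_pmf ?P"
    have eq: "(\<Sum>k=1..Suc T. a k * X k (f(Suc T := y))) = ?S f + a (Suc T) * X (Suc T) (f(Suc T := y))" for y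
    proof -
      have "(\<Sum>k=1..T. a k * X k (f(Suc T := y))) = ?S f"
      proof (intro sum.cong refl)
        fix k assume "k \<in> {1..T}"
        hence "X k (f(Suc T := y)) = X k f" by (intro dep) auto
        thus "a k * X k (f(Suc T := y)) = a k * X k f" by simp
      qed
      thus ?thesis by simp
    qed
    have "(\<integral>\<^sup>+y. ennreal (exp (\<Sum>k=1..Suc T. a k * X k (f(Suc T := y)))) \<partial>measure_pmf ?U)
        = (\<integral>\<^sup>+y. ennreal (exp (?S f)) * ennreal (exp (a (Suc T) * X (Suc T) (f(Suc T := y)))) \<partial>measure_pmf ?U)"
      unfolding eq by (simp add: exp_add ennreal_mult)
    also have "\<dots> = ennreal (exp (?S f)) * (\<integral>\<^sup>+y. ennreal (exp (a (Suc T) * X (Suc T) (f(Suc T := y)))) \<partial>measure_pmf ?U)"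
      by (rule nn_integral_cmult) simp
    also have "\<dots> \<le> ennreal (exp (?S f)) * ennreal ?K"
    proof (intro mult_left_mono hoeff_unif[OF n] a)
      show "(\<Sum>y\<in>{1..n}. X (Suc T) (f(Suc T := y))) = 0"
        using Suc.prems(1)[of "Suc T" f] f by (simp del: fun_upd_apply)
      fix y :: nat assume "y \<in> {1..n}"
      thus "\<bar>X (Suc T) (f(Suc T := y))\<bar> \<le> c"
        using Suc.prems(2)[of "Suc T"] upd_in_index_law[OF n f] by simp
    qed simp
    finally show "(\<integral>\<^sup>+y. ennreal (exp (\<Sum>k=1..Suc T. a k * X k (f(Suc T := y)))) \<partial>measure_pmf ?U)
        \<le> ennreal (exp (?S f)) * ennreal ?K" .
  qed
  also have "\<dots> = (\<integral>\<^sup>+f. ennreal (exp (?S f)) \<partial>measure_pmf ?P) * ennreal ?K"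
    by (rule nn_integral_multc) simp
  also have "\<dots> \<le> ennreal (exp ((\<Sum>k=1..T. (a k)^2) * c^2 / 2)) * ennreal ?K"
    by (intro mult_right_mono IH) simp
  also have "\<dots> = ennreal (exp ((\<Sum>k=1..Suc T. (a k)^2) * c^2 / 2))"
  proof -
    have "(\<Sum>k=1..Suc T. (a k)^2) * c^2 / 2 = (\<Sum>k=1..T. (a k)^2) * c^2 / 2 + (a (Suc T))^2 * c^2 / 2"
      by (simp add: algebra_simps add_divide_distrib)
    thus ?thesis by (simp only: exp_add ennreal_mult[symmetric] exp_ge_zero)
  qed
  finally show ?case .
qed

lemma azuma_tail:
  fixes X :: "nat \<Rightarrow> (nat \<Rightarrow> nat) \<Rightarrow> real" and a :: "nat \<Rightarrow> real"
  assumes n: "n \<ge> 1"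
    and dep: "\<And>k f g. (\<And>i. i \<le> k \<Longrightarrow> f i = g i) \<Longrightarrow> X k f = X k g"
    and mean0: "\<And>k f. 1 \<le> k \<Longrightarrow> k \<le> T \<Longrightarrow> f \<in> set_pmf (index_law n (k - 1)) \<Longrightarrow> (\<Sum>y\<in>{1..n}. X k (f(k:=y))) = 0"
    and bnd: "\<And>k f. 1 \<le> k \<Longrightarrow> k \<le> T \<Longrightarrow> f \<in> set_pmf (index_law n k) \<Longrightarrow> \<bar>X k f\<bar> \<le> c"
    and a: "\<And>k. a k \<ge> 0"
    and x: "x > 0" and V: "V > 0" "(\<Sum>k=1..T. (a k)^2) * c^2 \<le> V"
  shows "measure_pmf.prob (index_law n T) {f. (\<Sum>k=1..T. a k * X k f) \<ge> x} \<le> exp (- (x^2) / (2 * V))"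
proof -
  define l where "l = x / V"
  have l: "l \<ge> 0" using x V unfolding l_def by simp
  let ?S = "\<lambda>f. \<Sum>k=1..T. a k * X k f"
  let ?A = "{f. ?S f \<ge> x}"
  have "ennreal (measure_pmf.prob (index_law n T) ?A) = emeasure (measure_pmf (index_law n T)) ?A"
    by (simp add: measure_pmf.emeasure_eq_measure)
  also have "\<dots> = (\<integral>\<^sup>+f. indicator ?A f \<partial>measure_pmf (index_law n T))"
    by simp
  also have "\<dots> \<le> (\<integral>\<^sup>+f. ennreal (exp (- l * x)) * ennreal (exp (\<Sum>k=1..T. (l * a k) * X k f)) \<partial>measure_pmf (index_law n T))"
  proof (intro nn_integral_mono)
    fix f
    have "- l * x + (\<Sum>k=1..T. (l * a k) * X k f) = l * (?S f - x)"
      by (simp add: sum_distrib_left right_diff_distrib mult.assoc)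
    hence "exp (- l * x) * exp (\<Sum>k=1..T. (l * a k) * X k f) = exp (l * (?S f - x))"
      by (simp only: exp_add[symmetric])
    moreover have "1 \<le> exp (l * (?S f - x))" if h: "?S f \<ge> x"
    proof -
      have "0 \<le> l * (?S f - x)" using l h by simp
      thus ?thesis by simp
    qed
    ultimately show "indicator ?A f \<le> ennreal (exp (- l * x)) * ennreal (exp (\<Sum>k=1..T. (l * a k) * X k f))"
      by (auto simp: indicator_def ennreal_mult[symmetric])
  qed
  also have "\<dots> = ennreal (exp (- l * x)) * (\<integral>\<^sup>+f. ennreal (exp (\<Sum>k=1..T. (l * a k) * X k f)) \<partial>measure_pmf (index_law n T))"
    by (rule nn_integral_cmult) simp
  also have "\<dots> \<le> ennreal (exp (- l * x)) * ennreal (exp ((\<Sum>k=1..T. (l * a k)^2) * c^2 / 2))"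
  proof (rule mult_left_mono)
    show "(\<integral>\<^sup>+f. ennreal (exp (\<Sum>k=1..T. (l * a k) * X k f)) \<partial>measure_pmf (index_law n T))
        \<le> ennreal (exp ((\<Sum>k=1..T. (l * a k)^2) * c^2 / 2))"
      by (rule mgf_bound[OF n dep mean0 bnd]) (use a l in auto)
  qed simp
  also have "\<dots> = ennreal (exp (- l * x + l^2 * ((\<Sum>k=1..T. (a k)^2) * c^2) / 2))"
  proof -
    have "(\<Sum>k=1..T. (l * a k)^2) = l^2 * (\<Sum>k=1..T. (a k)^2)"
      by (simp add: power_mult_distrib sum_distrib_left)
    hence "- l * x + (\<Sum>k=1..T. (l * a k)^2) * c^2 / 2 = - l * x + l^2 * ((\<Sum>k=1..T. (a k)^2) * c^2) / 2"
      by simp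
    thus ?thesis by (simp only: ennreal_mult[symmetric] exp_ge_zero exp_add[symmetric])
  qed
  also have "\<dots> \<le> ennreal (exp (- l * x + l^2 * V / 2))"
    using V(2) by (intro ennreal_leI) (simp add: mult_left_mono divide_right_mono)
  also have "- l * x + l^2 * V / 2 = - (x^2) / (2 * V)"
    using V unfolding l_def by (simp add: field_simps power2_eq_square)
  finally show ?thesis by (simp add: ennreal_le_iff)
qed



lemma clip_small: "norm g \<le> \<tau> \<Longrightarrow> clip \<tau> g = g"
  by (cases "g = 0") (auto simp: clip_def min_def)

lemma clip_big: "\<tau> \<le> norm g \<Longrightarrow> clip \<tau> g = (\<tau> / norm g) *\<^sub>R g"
  by (auto simp: clip_def min_def)

lemma norm_clip_le: "\<tau> \<ge> 0 \<Longrightarrow> norm (clip \<tau> g) \<le> norm g"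
proof (cases "norm g \<le> \<tau>")
  case True thus ?thesis by (simp add: clip_small)
next
  case False
  hence "\<tau> < norm g" by simp
  moreover assume "\<tau> \<ge> 0"
  ultimately show ?thesis by (auto simp: clip_big abs_le_iff divide_le_eq_1)
qed

lemma norm_clip_le_tau: "\<tau> \<ge> 0 \<Longrightarrow> norm (clip \<tau> g) \<le> \<tau>"
proof (cases "norm g \<le> \<tau>")
  case True thus ?thesis by (simp add: clip_small)
next
  case False
  hence "\<tau> < norm g" by simp
  moreover assume "\<tau> \<ge> 0"
  ultimately show ?thesis by (auto simp: clip_big)
qed

lemma clip_err:
  assumes t: "\<tau> > 0" and a: "1 < \<alpha>"
  shows "norm (clip \<tau> g - g) \<le> norm g powr \<alpha> / \<tau> powr (\<alpha> - 1)"
proof (cases "norm g \<le> \<tau>")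
  case True thus ?thesis by (simp add: clip_small)
next
  case False
  hence lt: "\<tau> < norm g" by simp
  hence gpos: "norm g > 0" using t by linarith
  hence gnz: "g \<noteq> 0" by auto
  have "clip \<tau> g - g = (\<tau> / norm g - 1) *\<^sub>R g" using lt gnz by (simp add: clip_big algebra_simps)
  hence "norm (clip \<tau> g - g) = (1 - \<tau> / norm g) * norm g"
    using lt gpos gnz by (simp add: abs_if divide_less_eq_1)
  also have "\<dots> \<le> norm g" using t gpos by (simp add: mult_le_cancel_right1)
  also have "\<dots> \<le> norm g * (norm g / \<tau>) powr (\<alpha> - 1)"
  proof -
    have "1 \<le> (norm g / \<tau>) powr (\<alpha> - 1)"
      using lt t a by (intro ge_one_powr_ge_zero) auto
    thus ?thesis using gpos by (simp add: mult_le_cancel_left1)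
  qed
  also have "\<dots> = norm g powr \<alpha> / \<tau> powr (\<alpha> - 1)"
    using gpos t by (simp add: powr_divide powr_diff powr_one)
  finally show ?thesis .
qed

lemma inner_clip:
  fixes u m :: "'a::real_inner"
  assumes t: "\<tau> \<ge> 0"
  shows "u \<bullet> clip \<tau> m \<ge> \<tau> * norm u - 2 * \<tau> * norm (m - u) - \<tau>^2 / 4"
proof (cases "norm m \<le> \<tau>")
  case True
  let ?e = "norm (m - u)"
  have 1: "u \<bullet> m \<ge> norm m ^ 2 - ?e * norm m"
  proof -
    have "u \<bullet> m = m \<bullet> m + (u - m) \<bullet> m" by (simp add: inner_diff_left)
    moreover have "(u - m) \<bullet> m \<ge> - (norm (u - m) * norm m)"
      using Cauchy_Schwarz_ineq2[of "u - m" m] by (simp add: abs_le_iff)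
    moreover have "norm (u - m) = ?e" by (simp add: norm_minus_commute)
    ultimately show ?thesis by (simp add: power2_norm_eq_inner)
  qed
  have 2: "norm u \<le> norm m + ?e" using norm_triangle_ineq[of m "u - m"] by (simp add: norm_minus_commute)
  have 3: "(\<tau> - norm m) * norm m \<le> \<tau>^2 / 4"
  proof -
    have "0 \<le> (\<tau> - 2 * norm m)^2" by simp
    thus ?thesis by (simp add: power2_eq_square algebra_simps)
  qed
  have 4: "(\<tau> - norm m) * ?e \<ge> 0" using True by simp
  have "\<tau> * norm u \<le> \<tau> * norm m + \<tau> * ?e" using 2 t by (simp add: mult_left_mono distrib_left[symmetric])
  thus ?thesis using 1 3 4 True by (simp add: clip_small algebra_simps power2_eq_square)
next
  case False
  hence lt: "\<tau> < norm m" by simp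
  hence mpos: "norm m > 0" using t by linarith
  have "u \<bullet> m / norm m \<ge> norm u - 2 * norm (m - u)"
  proof -
    have "u \<bullet> m = m \<bullet> m + (u - m) \<bullet> m" by (simp add: inner_diff_left)
    moreover have "(u - m) \<bullet> m \<ge> - (norm (u - m) * norm m)"
      using Cauchy_Schwarz_ineq2[of "u - m" m] by (simp add: abs_le_iff)
    ultimately have "u \<bullet> m \<ge> norm m * norm m - norm (m - u) * norm m"
      by (simp add: norm_minus_commute power2_norm_eq_inner[symmetric] power2_eq_square)
    hence "u \<bullet> m / norm m \<ge> norm m - norm (m - u)"
      using mpos by (simp add: le_divide_eq algebra_simps)
    moreover have "norm u \<le> norm m + norm (m - u)"
      using norm_triangle_ineq[of m "u - m"] by (simp add: norm_minus_commute)
    ultimately show ?thesis by simp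
  qed
  hence "\<tau> * (u \<bullet> m / norm m) \<ge> \<tau> * (norm u - 2 * norm (m - u))"
    using t by (intro mult_left_mono) auto
  moreover have "u \<bullet> clip \<tau> m = \<tau> * (u \<bullet> m / norm m)"
    using lt mpos by (simp add: clip_big)
  moreover have "\<tau>^2 / 4 \<ge> 0" by simp
  moreover have "\<tau> * (norm u - 2 * norm (m - u)) = \<tau> * norm u - 2 * \<tau> * norm (m - u)" by (simp add: algebra_simps)
  ultimately show ?thesis by linarith
qed

lemma descent:
  fixes F :: "'a::real_inner \<Rightarrow> real" and D :: "'a \<Rightarrow> 'a"
  assumes der: "\<And>w. (F has_derivative (\<lambda>h. D w \<bullet> h)) (at w)"
    and lip: "\<And>u v. norm (D u - D v) \<le> L * norm (u - v)"
  shows "F y \<le> F x + D x \<bullet> (y - x) + L / 2 * norm (y - x)^2"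
proof -
  define d where "d = y - x"
  define \<phi> where "\<phi> t = F (x + t *\<^sub>R d) - t * (D x \<bullet> d) - L / 2 * t^2 * norm d ^ 2" for t :: real
  have "\<phi> 1 \<le> \<phi> 0"
  proof (rule DERIV_nonpos_imp_nonincreasing[of 0 1])
    fix t :: real assume t: "0 \<le> t" "t \<le> 1"
    have h1: "((\<lambda>t. F (x + t *\<^sub>R d)) has_derivative (\<lambda>s. D (x + t *\<^sub>R d) \<bullet> (s *\<^sub>R d))) (at t)"
      by (rule has_derivative_compose[of "\<lambda>t. x + t *\<^sub>R d" "\<lambda>s. s *\<^sub>R d", OF _ der])
         (auto intro!: derivative_eq_intros)
    have "(\<lambda>s. D (x + t *\<^sub>R d) \<bullet> (s *\<^sub>R d)) = (*) (D (x + t *\<^sub>R d) \<bullet> d)"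
      by (simp add: fun_eq_iff mult.commute)
    with h1 have h2: "((\<lambda>t. F (x + t *\<^sub>R d)) has_real_derivative (D (x + t *\<^sub>R d) \<bullet> d)) (at t)"
      by (simp add: has_field_derivative_def)
    have h3: "(\<phi> has_real_derivative (D (x + t *\<^sub>R d) \<bullet> d - D x \<bullet> d - L / 2 * (2 * t) * norm d ^ 2)) (at t)"
      unfolding \<phi>_def by (auto intro!: derivative_eq_intros h2)
    have "D (x + t *\<^sub>R d) \<bullet> d - D x \<bullet> d = (D (x + t *\<^sub>R d) - D x) \<bullet> d"
      by (simp add: inner_diff_left)
    also have "\<dots> \<le> norm (D (x + t *\<^sub>R d) - D x) * norm d"
      by (rule norm_cauchy_schwarz)
    also have "\<dots> \<le> L * norm (t *\<^sub>R d) * norm d"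
      using lip[of "x + t *\<^sub>R d" x] by (intro mult_right_mono) auto
    also have "\<dots> = L * t * norm d ^ 2" using t by (simp add: power2_eq_square)
    finally have "D (x + t *\<^sub>R d) \<bullet> d - D x \<bullet> d - L / 2 * (2 * t) * norm d ^ 2 \<le> 0" by simp
    with h3 show "\<exists>y. (\<phi> has_real_derivative y) (at t) \<and> y \<le> 0" by blast
  qed simp
  thus ?thesis unfolding \<phi>_def d_def by simp
qed



locale sgdm =
  fixes gf :: "'a::euclidean_space \<Rightarrow> 'z \<Rightarrow> 'a" and zs :: "nat \<Rightarrow> 'z" and n :: nat
    and \<gamma> \<tau>1 \<tau>2 \<eta> :: real
begin

definition st where "st js k = sgdm_state gf zs \<gamma> \<tau>1 \<tau>2 (\<lambda>_. \<eta>) js k"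
definition W where "W js t = fst (st js (t - 1))"
definition M where "M js t = snd (st js t)"
definition DF where "DF w = (1 / real n) *\<^sub>R (\<Sum>i=1..n. gf w (zs i))"
definition g where "g js t = clip \<tau>1 (gf (W js t) (zs (js t)))"
definition gb where "gb js t = (1 / real n) *\<^sub>R (\<Sum>j=1..n. clip \<tau>1 (gf (W js t) (zs j)))"
definition \<zeta> where "\<zeta> js t = g js t - gb js t"
definition Z where "Z js t = (1 - \<gamma>) *\<^sub>R (\<Sum>k=1..t. \<gamma>^(t - k) *\<^sub>R \<zeta> js k)"

lemma W_iter: "W js t = sgdm_iter gf zs \<gamma> \<tau>1 \<tau>2 (\<lambda>_. \<eta>) js t"
  by (simp add: W_def st_def sgdm_iter_def)

lemma M0: "M js 0 = 0" and W1: "W js 1 = 0" and W1': "W js (Suc 0) = 0"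
  by (simp_all add: M_def W_def st_def)

lemma M_Suc: "M js (Suc k) = \<gamma> *\<^sub>R M js k + (1 - \<gamma>) *\<^sub>R g js (Suc k)"
  by (simp add: M_def W_def g_def st_def Let_def split_beta)

lemma W_Suc: "W js (Suc (Suc k)) = W js (Suc k) - \<eta> *\<^sub>R clip \<tau>2 (M js (Suc k))"
  by (simp add: M_def W_def g_def st_def Let_def split_beta)

lemma st_dep: "(\<And>i. 1 \<le> i \<Longrightarrow> i \<le> k \<Longrightarrow> f i = h i) \<Longrightarrow> st f k = st h k"
proof (induction k)
  case 0 thus ?case by (simp add: st_def)
next
  case (Suc k)
  hence "st f k = st h k" by simp
  thus ?case using Suc.prems[of "Suc k"] by (simp add: st_def Let_def split_beta)
qed

lemma W_dep: "(\<And>i. i < t \<Longrightarrow> f i = h i) \<Longrightarrow> W f t = W h t"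
proof -
  assume a: "\<And>i. i < t \<Longrightarrow> f i = h i"
  have "st f (t - 1) = st h (t - 1)" by (rule st_dep) (use a in auto)
  thus ?thesis by (simp add: W_def)
qed

lemma Z_Suc: "Z js (Suc t) = \<gamma> *\<^sub>R Z js t + (1 - \<gamma>) *\<^sub>R \<zeta> js (Suc t)"
proof -
  have "(\<Sum>k=1..Suc t. \<gamma>^(Suc t - k) *\<^sub>R \<zeta> js k) = \<gamma> *\<^sub>R (\<Sum>k=1..t. \<gamma>^(t - k) *\<^sub>R \<zeta> js k) + \<zeta> js (Suc t)"
  proof -
    have "(\<Sum>k=1..t. \<gamma>^(Suc t - k) *\<^sub>R \<zeta> js k) = \<gamma> *\<^sub>R (\<Sum>k=1..t. \<gamma>^(t - k) *\<^sub>R \<zeta> js k)"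
      by (simp add: scaleR_sum_right Suc_diff_le)
    thus ?thesis by simp
  qed
  thus ?thesis by (simp add: Z_def scaleR_add_right)
qed

lemma Z1: "Z js (Suc 0) = (1 - \<gamma>) *\<^sub>R \<zeta> js 1"
  by (simp add: Z_def)

lemma E_bound:
  assumes g0: "0 \<le> \<gamma>" and g1: "\<gamma> < 1" and L: "L \<ge> 0" and et: "\<eta> \<ge> 0" and t2: "\<tau>2 \<ge> 0"
    and lip: "\<And>u v. norm (DF u - DF v) \<le> L * norm (u - v)"
    and bias: "\<And>t. 1 \<le> t \<Longrightarrow> t \<le> T \<Longrightarrow> norm (gb js t - DF (W js t)) \<le> b"
  shows "Suc k \<le> T \<Longrightarrow> norm (M js (Suc k) - DF (W js (Suc k)) - Z js (Suc k))
           \<le> \<gamma>^(Suc k) * norm (DF 0) + L * \<eta> * \<tau>2 / (1 - \<gamma>) + b"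
proof (induction k)
  case 0
  have b0: "norm (gb js 1 - DF (W js 1)) \<le> b" using bias[of 1] 0 by simp
  have "M js (Suc 0) - DF (W js (Suc 0)) - Z js (Suc 0) = (1 - \<gamma>) *\<^sub>R (gb js 1 - DF 0) - \<gamma> *\<^sub>R DF 0"
    by (simp add: M_Suc M0 Z1 \<zeta>_def W1' algebra_simps)
  hence "norm (M js (Suc 0) - DF (W js (Suc 0)) - Z js (Suc 0)) \<le> norm ((1 - \<gamma>) *\<^sub>R (gb js 1 - DF 0)) + norm (\<gamma> *\<^sub>R DF 0)"
    by (simp only: norm_triangle_ineq4)
  also have "\<dots> = (1 - \<gamma>) * norm (gb js 1 - DF 0) + \<gamma> * norm (DF 0)"
    using g0 g1 by simp
  also have "\<dots> \<le> (1 - \<gamma>) * b + \<gamma> * norm (DF 0)"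
    using b0 g1 by (intro add_right_mono mult_left_mono) (auto simp: W1')
  also have "\<dots> \<le> \<gamma>^(Suc 0) * norm (DF 0) + L * \<eta> * \<tau>2 / (1 - \<gamma>) + b"
  proof -
    have "L * \<eta> * \<tau>2 / (1 - \<gamma>) \<ge> 0" using L et t2 g1 by simp
    moreover have "b \<ge> 0" using b0 by (meson norm_ge_zero order.trans)
    moreover have "\<gamma> * b \<ge> 0" using g0 calculation by simp
    moreover have "(1 - \<gamma>) * b = b - \<gamma> * b" by (simp add: algebra_simps)
    ultimately show ?thesis by simp
  qed
  finally show ?case .
next
  case (Suc k)
  let ?E = "\<lambda>t. M js t - DF (W js t) - Z js t"
  let ?c = "L * \<eta> * \<tau>2"
  have IH: "norm (?E (Suc k)) \<le> \<gamma>^(Suc k) * norm (DF 0) + ?c / (1 - \<gamma>) + b" using Suc by simp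
  have bk: "norm (gb js (Suc (Suc k)) - DF (W js (Suc (Suc k)))) \<le> b" using bias Suc.prems by simp
  have dk: "norm (DF (W js (Suc k)) - DF (W js (Suc (Suc k)))) \<le> ?c"
  proof -
    have "norm (DF (W js (Suc k)) - DF (W js (Suc (Suc k)))) \<le> L * norm (W js (Suc k) - W js (Suc (Suc k)))"
      by (rule lip)
    also have "W js (Suc k) - W js (Suc (Suc k)) = \<eta> *\<^sub>R clip \<tau>2 (M js (Suc k))" by (simp add: W_Suc)
    also have "L * norm \<dots> \<le> L * (\<eta> * \<tau>2)"
      using et L norm_clip_le_tau[OF t2] by (auto intro!: mult_left_mono)
    finally show ?thesis by simp
  qed
  have eq: "?E (Suc (Suc k)) = \<gamma> *\<^sub>R ?E (Suc k) + \<gamma> *\<^sub>R (DF (W js (Suc k)) - DF (W js (Suc (Suc k))))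
      + (1 - \<gamma>) *\<^sub>R (gb js (Suc (Suc k)) - DF (W js (Suc (Suc k))))"
    by (simp add: M_Suc[of js "Suc k"] Z_Suc[of js "Suc k"] \<zeta>_def algebra_simps)
  have "norm (?E (Suc (Suc k))) \<le> \<gamma> * norm (?E (Suc k)) + \<gamma> * norm (DF (W js (Suc k)) - DF (W js (Suc (Suc k))))
      + (1 - \<gamma>) * norm (gb js (Suc (Suc k)) - DF (W js (Suc (Suc k))))"
  proof -
    have "norm (?E (Suc (Suc k))) \<le> norm (\<gamma> *\<^sub>R ?E (Suc k) + \<gamma> *\<^sub>R (DF (W js (Suc k)) - DF (W js (Suc (Suc k)))))
      + norm ((1 - \<gamma>) *\<^sub>R (gb js (Suc (Suc k)) - DF (W js (Suc (Suc k)))))"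
      unfolding eq by (rule norm_triangle_ineq)
    also have "\<dots> \<le> norm (\<gamma> *\<^sub>R ?E (Suc k)) + norm (\<gamma> *\<^sub>R (DF (W js (Suc k)) - DF (W js (Suc (Suc k)))))
      + norm ((1 - \<gamma>) *\<^sub>R (gb js (Suc (Suc k)) - DF (W js (Suc (Suc k)))))"
      by (intro add_right_mono norm_triangle_ineq)
    finally show ?thesis using g0 g1 by simp
  qed
  also have "\<dots> \<le> \<gamma> * (\<gamma>^(Suc k) * norm (DF 0) + ?c / (1 - \<gamma>) + b) + \<gamma> * ?c + (1 - \<gamma>) * b"
    using IH dk bk g0 g1 by (intro add_mono mult_left_mono) auto
  also have "\<dots> \<le> \<gamma>^(Suc (Suc k)) * norm (DF 0) + ?c / (1 - \<gamma>) + b"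
  proof -
    have c0: "?c \<ge> 0" using L et t2 by simp
    have "\<gamma> * (?c / (1 - \<gamma>)) + \<gamma> * ?c \<le> ?c / (1 - \<gamma>)"
    proof -
      have "(\<gamma> + \<gamma> * (1 - \<gamma>)) * ?c \<le> 1 * ?c"
      proof (intro mult_right_mono c0)
        have "0 \<le> (1 - \<gamma>)^2" by simp
        thus "\<gamma> + \<gamma> * (1 - \<gamma>) \<le> 1" by (simp add: power2_eq_square algebra_simps)
      qed
      hence "((\<gamma> + \<gamma> * (1 - \<gamma>)) * ?c) / (1 - \<gamma>) \<le> (1 * ?c) / (1 - \<gamma>)"
        using g1 by (intro divide_right_mono) auto
      moreover have "\<gamma> * (?c / (1 - \<gamma>)) + \<gamma> * ?c = ((\<gamma> + \<gamma> * (1 - \<gamma>)) * ?c) / (1 - \<gamma>)"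
        using g1 by (simp add: field_simps)
      ultimately show ?thesis by simp
    qed
    moreover have "\<gamma> * (\<gamma>^(Suc k) * norm (DF 0) + ?c / (1 - \<gamma>) + b) = \<gamma>^(Suc (Suc k)) * norm (DF 0) + \<gamma> * (?c / (1 - \<gamma>)) + \<gamma> * b"
      by (simp add: distrib_left)
    moreover have "(1 - \<gamma>) * b = b - \<gamma> * b" by (simp add: left_diff_distrib)
    ultimately show ?thesis by linarith
  qed
  finally show ?case .
qed

lemma descent_step:
  fixes F :: "'a \<Rightarrow> real"
  assumes Fder: "\<And>w. (F has_derivative (\<lambda>h. DF w \<bullet> h)) (at w)"
    and lip: "\<And>u v. norm (DF u - DF v) \<le> L * norm (u - v)"
    and L: "L \<ge> 0" and et: "\<eta> \<ge> 0" and t2: "\<tau>2 \<ge> 0"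
  shows "F (W js (Suc (Suc k))) \<le> F (W js (Suc k)) - \<eta> * \<tau>2 * norm (DF (W js (Suc k)))
     + 2 * \<eta> * \<tau>2 * norm (M js (Suc k) - DF (W js (Suc k))) + \<eta> * \<tau>2^2 / 4 + L * \<eta>^2 * \<tau>2^2 / 2"
proof -
  let ?x = "W js (Suc k)" and ?c = "clip \<tau>2 (M js (Suc k))"
  have d: "W js (Suc (Suc k)) - ?x = - (\<eta> *\<^sub>R ?c)" by (simp add: W_Suc)
  have "F (W js (Suc (Suc k))) \<le> F ?x + DF ?x \<bullet> (W js (Suc (Suc k)) - ?x) + L / 2 * norm (W js (Suc (Suc k)) - ?x)^2"
    by (rule descent[OF Fder lip])
  also have "DF ?x \<bullet> (W js (Suc (Suc k)) - ?x) = - \<eta> * (DF ?x \<bullet> ?c)" unfolding d by simp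
  also have "- \<eta> * (DF ?x \<bullet> ?c) \<le> - \<eta> * (\<tau>2 * norm (DF ?x) - 2 * \<tau>2 * norm (M js (Suc k) - DF ?x) - \<tau>2^2 / 4)"
    using inner_clip[OF t2, of "DF ?x" "M js (Suc k)"] et by (intro mult_left_mono_neg) auto
  also have "L / 2 * norm (W js (Suc (Suc k)) - ?x)^2 \<le> L / 2 * (\<eta> * \<tau>2)^2"
  proof -
    have "norm (W js (Suc (Suc k)) - ?x) \<le> \<eta> * \<tau>2"
      unfolding d using et norm_clip_le_tau[OF t2] by (auto intro: mult_left_mono)
    hence "norm (W js (Suc (Suc k)) - ?x)^2 \<le> (\<eta> * \<tau>2)^2" by (intro power_mono) auto
    thus ?thesis using L by (intro mult_left_mono) auto
  qed
  finally show ?thesis by (simp add: algebra_simps power_mult_distrib)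
qed

lemma descent_sum:
  fixes F :: "'a \<Rightarrow> real"
  assumes Fder: "\<And>w. (F has_derivative (\<lambda>h. DF w \<bullet> h)) (at w)"
    and lip: "\<And>u v. norm (DF u - DF v) \<le> L * norm (u - v)"
    and L: "L \<ge> 0" and et: "\<eta> \<ge> 0" and t2: "\<tau>2 \<ge> 0"
  shows "\<eta> * \<tau>2 * (\<Sum>t=1..T. norm (DF (W js t))) \<le> F (W js 1) - F (W js (Suc T))
     + (\<Sum>t=1..T. 2 * \<eta> * \<tau>2 * norm (M js t - DF (W js t))) + real T * (\<eta> * \<tau>2^2 / 4 + L * \<eta>^2 * \<tau>2^2 / 2)"
proof (induction T)
  case 0 thus ?case by simp
next
  case (Suc T)
  have "F (W js (Suc (Suc T))) \<le> F (W js (Suc T)) - \<eta> * \<tau>2 * norm (DF (W js (Suc T)))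
     + 2 * \<eta> * \<tau>2 * norm (M js (Suc T) - DF (W js (Suc T))) + \<eta> * \<tau>2^2 / 4 + L * \<eta>^2 * \<tau>2^2 / 2"
    by (rule descent_step[OF Fder lip L et t2])
  moreover have s1: "(\<Sum>t=1..Suc T. norm (DF (W js t))) = (\<Sum>t=1..T. norm (DF (W js t))) + norm (DF (W js (Suc T)))"
    by simp
  moreover have s2: "(\<Sum>t=1..Suc T. 2 * \<eta> * \<tau>2 * norm (M js t - DF (W js t))) = (\<Sum>t=1..T. 2 * \<eta> * \<tau>2 * norm (M js t - DF (W js t))) + 2 * \<eta> * \<tau>2 * norm (M js (Suc T) - DF (W js (Suc T)))"
    by simp
  ultimately show ?case using Suc.IH unfolding s1 s2 of_nat_Suc ring_distribs by linarith
qed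

end


lemma geo_rev:
  fixes r :: real assumes "0 \<le> r" "r < 1"
  shows "(\<Sum>k=1..t. r^(t - k)) \<le> 1 / (1 - r)"
proof (induction t)
  case 0 thus ?case using assms by simp
next
  case (Suc t)
  have "(\<Sum>k=1..Suc t. r^(Suc t - k)) = r * (\<Sum>k=1..t. r^(t - k)) + 1"
  proof -
    have "(\<Sum>k=1..t. r^(Suc t - k)) = r * (\<Sum>k=1..t. r^(t - k))"
      by (simp add: sum_distrib_left Suc_diff_le)
    thus ?thesis by simp
  qed
  also have "\<dots> \<le> r * (1 / (1 - r)) + 1"
    using Suc assms by (intro add_right_mono mult_left_mono) auto
  also have "\<dots> = 1 / (1 - r)" using assms by (simp add: field_simps)
  finally show ?case .
qed

lemma geo_fwd:
  fixes r :: real assumes "0 \<le> r" "r < 1"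
  shows "(\<Sum>t=1..T. r^t) \<le> 1 / (1 - r)"
proof -
  have "(\<Sum>t=1..T. r^t) \<le> (\<Sum>t<Suc T. r^t)"
    by (rule sum_mono2) (use assms in auto)
  also have "\<dots> = (1 - r^Suc T) / (1 - r)"
  proof -
    have "r \<noteq> 1" using assms by simp
    thus ?thesis by (simp only: sum_gp_strict if_False)
  qed
  also have "\<dots> \<le> 1 / (1 - r)" using assms by (intro divide_right_mono) auto
  finally show ?thesis .
qed

lemma index_law_extend:
  assumes n: "n \<ge> 1" and f: "f \<in> set_pmf (index_law n k)" and kT: "k \<le> T"
  shows "\<exists>f'\<in>set_pmf (index_law n T). \<forall>i\<le>k. f' i = f i"
proof -
  define f' where "f' i = (if i \<le> k then f i else if i \<le> T then 1 else 0)" for i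
  have fa: "\<forall>x. (x \<in> {1..k} \<longrightarrow> f x \<in> {1..n}) \<and> (x \<notin> {1..k} \<longrightarrow> f x = 0)"
    using f unfolding set_index_law[OF n] .
  have "\<forall>x. (x \<in> {1..T} \<longrightarrow> f' x \<in> {1..n}) \<and> (x \<notin> {1..T} \<longrightarrow> f' x = 0)"
  proof
    fix x
    show "(x \<in> {1..T} \<longrightarrow> f' x \<in> {1..n}) \<and> (x \<notin> {1..T} \<longrightarrow> f' x = 0)"
    proof (cases "x \<le> k")
      case True
      thus ?thesis using fa[rule_format, of x] kT by (auto simp: f'_def)
    next
      case False
      thus ?thesis using n kT by (auto simp: f'_def)
    qed
  qed
  hence "f' \<in> set_pmf (index_law n T)" unfolding set_index_law[OF n] .
  moreover have "\<forall>i\<le>k. f' i = f i" by (simp add: f'_def)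
  ultimately show ?thesis by blast
qed

context sgdm
begin

lemma zeta_mean0:
  assumes n: "n \<ge> 1"
  shows "(\<Sum>y\<in>{1..n}. \<zeta> (f(k := y)) k \<bullet> b) = 0"
proof -
  have Wk: "W (f(k := y)) k = W f k" for y by (rule W_dep) auto
  define G where "G = gb f k"
  have gbk: "gb (f(k := y)) k = G" for y by (simp add: gb_def Wk G_def)
  have "(\<Sum>y\<in>{1..n}. \<zeta> (f(k := y)) k \<bullet> b) = (\<Sum>y\<in>{1..n}. clip \<tau>1 (gf (W f k) (zs y)) \<bullet> b - G \<bullet> b)"
    by (intro sum.cong refl) (simp add: \<zeta>_def g_def Wk gbk inner_diff_left)
  also have "\<dots> = (\<Sum>y\<in>{1..n}. clip \<tau>1 (gf (W f k) (zs y))) \<bullet> b - real n * (G \<bullet> b)"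
    by (simp add: sum_subtractf inner_sum_left)
  also have "real n * (G \<bullet> b) = (\<Sum>y\<in>{1..n}. clip \<tau>1 (gf (W f k) (zs y))) \<bullet> b"
    using n by (simp add: G_def gb_def)
  finally show ?thesis by (simp only: diff_self)
qed

lemma zeta_bound:
  assumes n: "n \<ge> 1" and t1: "\<tau>1 \<ge> 0"
    and bound: "\<And>js t j. js \<in> set_pmf (index_law n T) \<Longrightarrow> t \<in> {1..T} \<Longrightarrow> j \<in> {1..n} \<Longrightarrow> norm (gf (W js t) (zs j)) \<le> B"
    and k: "1 \<le> k" "k \<le> T" and f: "f \<in> set_pmf (index_law n k)"
  shows "norm (\<zeta> f k) \<le> 2 * B"
proof -
  obtain f' where f': "f' \<in> set_pmf (index_law n T)" "\<forall>i\<le>k. f' i = f i"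
    using index_law_extend[OF n f k(2)] by blast
  have "W f k = W f' k" by (rule W_dep) (use f' in auto)
  hence bj: "norm (clip \<tau>1 (gf (W f k) (zs j))) \<le> B" if "j \<in> {1..n}" for j
    using bound[OF f'(1) _ that, of k] k norm_clip_le[OF t1] order.trans by fastforce
  have fk: "f k \<in> {1..n}" using f k unfolding set_index_law[OF n] by auto
  have "norm (gb f k) \<le> (1 / real n) * (\<Sum>j=1..n. norm (clip \<tau>1 (gf (W f k) (zs j))))"
    unfolding gb_def by (simp add: divide_right_mono norm_sum)
  also have "\<dots> \<le> (1 / real n) * (\<Sum>j=1..n. B)"
    by (intro mult_left_mono sum_mono bj) auto
  also have "\<dots> = B" using n by simp
  finally have "norm (gb f k) \<le> B" .
  moreover have "norm (g f k) \<le> B" unfolding g_def using bj[OF fk] .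
  ultimately show ?thesis unfolding \<zeta>_def using norm_triangle_ineq4[of "g f k" "gb f k"] by linarith
qed

end


context sgdm
begin

lemma zeta_dep: "(\<And>i. i \<le> k \<Longrightarrow> f i = h i) \<Longrightarrow> \<zeta> f k = \<zeta> h k"
proof -
  assume a: "\<And>i. i \<le> k \<Longrightarrow> f i = h i"
  have "W f k = W h k" by (rule W_dep) (use a in auto)
  thus ?thesis using a[of k] by (simp add: \<zeta>_def g_def gb_def)
qed

lemma Z_conc:
  assumes n: "n \<ge> 1" and g0: "0 \<le> \<gamma>" and g1: "\<gamma> < 1" and t1: "\<tau>1 \<ge> 0" and B: "B > 0"
    and bound: "\<And>js t j. js \<in> set_pmf (index_law n T) \<Longrightarrow> t \<in> {1..T} \<Longrightarrow> j \<in> {1..n} \<Longrightarrow> norm (gf (W js t) (zs j)) \<le> B"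
    and x: "x > 0"
  shows "measure_pmf.prob (index_law n T) {js. \<exists>t\<in>{1..T}. \<exists>b\<in>(Basis::'a set). \<bar>Z js t \<bullet> b\<bar> \<ge> x}
        \<le> real T * (2 * real DIM('a)) * exp (- (x^2) / (2 * (4 * B^2 * (1 - \<gamma>))))"
proof -
  define V where "V = 4 * B^2 * (1 - \<gamma>)"
  have V: "V > 0" using B g1 by (simp add: V_def)
  define cf where "cf t k = (if k \<le> t then (1 - \<gamma>) * \<gamma>^(t - k) else 0)" for t k :: nat
  define A where "A p = {js. (\<Sum>k=1..T. cf (fst p) k * (snd (snd p) * (\<zeta> js k \<bullet> fst (snd p)))) \<ge> x}"
    for p :: "nat \<times> 'a \<times> real"
  define I where "I = {1..T} \<times> (Basis::'a set) \<times> {1::real, -1}"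
  have finI: "finite I" by (simp add: I_def)
  have cardI: "card I = T * (DIM('a) * 2)" by (simp add: I_def card_cartesian_product)
  have filt: "{k \<in> {1..T}. k \<le> t} = {1..t}" if "t \<le> T" for t using that by auto
  have Zb: "Z js t \<bullet> b = (\<Sum>k=1..T. cf t k * (\<zeta> js k \<bullet> b))" if "t \<le> T" for js t and b :: 'a
  proof -
    have "(\<Sum>k=1..T. cf t k * (\<zeta> js k \<bullet> b)) = (\<Sum>k\<in>{k \<in> {1..T}. k \<le> t}. (1 - \<gamma>) * \<gamma>^(t - k) * (\<zeta> js k \<bullet> b))"
      by (simp only: sum.inter_filter[OF finite_atLeastAtMost]) (intro sum.cong refl, simp add: cf_def)
    also have "\<dots> = (\<Sum>k=1..t. (1 - \<gamma>) * \<gamma>^(t - k) * (\<zeta> js k \<bullet> b))" using filt[OF that] by simp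
    also have "\<dots> = Z js t \<bullet> b"
      by (simp add: Z_def inner_sum_left sum_distrib_left mult.assoc)
    finally show ?thesis by simp
  qed
  have sub: "{js. \<exists>t\<in>{1..T}. \<exists>b\<in>(Basis::'a set). \<bar>Z js t \<bullet> b\<bar> \<ge> x} \<subseteq> (\<Union>p\<in>I. A p)"
  proof
    fix js assume "js \<in> {js. \<exists>t\<in>{1..T}. \<exists>b\<in>(Basis::'a set). \<bar>Z js t \<bullet> b\<bar> \<ge> x}"
    then obtain t b where tb: "t \<in> {1..T}" "b \<in> (Basis::'a set)" "\<bar>Z js t \<bullet> b\<bar> \<ge> x" by blast
    have eq: "(\<Sum>k=1..T. cf t k * (s * (\<zeta> js k \<bullet> b))) = s * (Z js t \<bullet> b)" for s
      using Zb[of t js b] tb(1) by (simp add: sum_distrib_left algebra_simps)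
    show "js \<in> (\<Union>p\<in>I. A p)"
    proof (cases "Z js t \<bullet> b \<ge> x")
      case True
      hence "js \<in> A (t, b, 1)" using eq[of 1] by (simp add: A_def)
      moreover have "(t, b, 1) \<in> I" using tb by (simp add: I_def)
      ultimately show ?thesis by blast
    next
      case False
      hence "- (Z js t \<bullet> b) \<ge> x" using tb(3) by linarith
      hence "js \<in> A (t, b, -1)" using eq[of "-1"] by (simp add: A_def sum_negf)
      moreover have "(t, b, -1) \<in> I" using tb by (simp add: I_def)
      ultimately show ?thesis by blast
    qed
  qed
  have each: "measure_pmf.prob (index_law n T) (A p) \<le> exp (- (x^2) / (2 * V))" if p: "p \<in> I" for p
  proof -
    obtain t b s where pe: "p = (t, b, s)" by (cases p) auto
    have tT: "t \<in> {1..T}" and bB: "b \<in> Basis" and s: "s = 1 \<or> s = -1" using p pe by (auto simp: I_def)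
    have "measure_pmf.prob (index_law n T) {js. (\<Sum>k=1..T. cf t k * (s * (\<zeta> js k \<bullet> b))) \<ge> x} \<le> exp (- (x^2) / (2 * V))"
    proof (rule azuma_tail[OF n, where c = "2 * B"])
      fix k :: nat and f h :: "nat \<Rightarrow> nat" assume "\<And>i. i \<le> k \<Longrightarrow> f i = h i"
      thus "s * (\<zeta> f k \<bullet> b) = s * (\<zeta> h k \<bullet> b)" using zeta_dep by metis
    next
      fix k :: nat and f :: "nat \<Rightarrow> nat"
      show "(\<Sum>y\<in>{1..n}. s * (\<zeta> (f(k := y)) k \<bullet> b)) = 0"
        using zeta_mean0[OF n, of f k b] by (simp add: sum_distrib_left[symmetric] del: fun_upd_apply)
    next
      fix k :: nat and f :: "nat \<Rightarrow> nat" assume "1 \<le> k" "k \<le> T" "f \<in> set_pmf (index_law n k)"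
      hence "norm (\<zeta> f k) \<le> 2 * B" by (intro zeta_bound[OF n t1 bound]) auto
      moreover have "\<bar>\<zeta> f k \<bullet> b\<bar> \<le> norm (\<zeta> f k)" using bB by (rule Basis_le_norm)
      ultimately show "\<bar>s * (\<zeta> f k \<bullet> b)\<bar> \<le> 2 * B" using s by (auto simp: abs_mult)
    next
      fix k show "0 \<le> cf t k" using g0 g1 by (simp add: cf_def)
    next
      show "x > 0" by (rule x)
    next
      show "V > 0" by (rule V)
    next
      have "(\<Sum>k=1..T. (cf t k)^2) = (\<Sum>k\<in>{k \<in> {1..T}. k \<le> t}. (1 - \<gamma>)^2 * (\<gamma>^2)^(t - k))"
        by (simp only: sum.inter_filter[OF finite_atLeastAtMost])
           (intro sum.cong refl, simp add: cf_def power_mult_distrib power_mult[symmetric] mult.commute)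
      also have "\<dots> \<le> (\<Sum>k=1..t. (1 - \<gamma>)^2 * (\<gamma>^2)^(t - k))"
        by (rule sum_mono2) auto
      also have "\<dots> = (1 - \<gamma>)^2 * (\<Sum>k=1..t. (\<gamma>^2)^(t - k))" by (simp add: sum_distrib_left)
      also have "\<dots> \<le> (1 - \<gamma>)^2 * (1 / (1 - \<gamma>^2))"
        using g0 g1 by (intro mult_left_mono geo_rev) (auto simp: power_less_one_iff abs_square_less_1)
      also have "\<dots> = (1 - \<gamma>) / (1 + \<gamma>)"
      proof -
        have h: "1 - \<gamma>^2 = (1 - \<gamma>) * (1 + \<gamma>)" by (simp add: power2_eq_square algebra_simps)
        have "1 - \<gamma> \<noteq> 0" "1 + \<gamma> \<noteq> 0" using g0 g1 by auto
        thus ?thesis unfolding h by (simp add: power2_eq_square)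
      qed
      also have "\<dots> \<le> 1 - \<gamma>"
        using divide_left_mono[of 1 "1 + \<gamma>" "1 - \<gamma>"] g0 g1 by simp
      finally have "(\<Sum>k=1..T. (cf t k)^2) \<le> 1 - \<gamma>" .
      hence "(\<Sum>k=1..T. (cf t k)^2) * (2 * B)^2 \<le> (1 - \<gamma>) * (2 * B)^2"
        by (intro mult_right_mono) auto
      thus "(\<Sum>k=1..T. (cf t k)^2) * (2 * B)^2 \<le> V" by (simp add: V_def power2_eq_square algebra_simps)
    qed
    thus ?thesis by (simp add: A_def pe)
  qed
  have "measure_pmf.prob (index_law n T) {js. \<exists>t\<in>{1..T}. \<exists>b\<in>(Basis::'a set). \<bar>Z js t \<bullet> b\<bar> \<ge> x}
      \<le> measure_pmf.prob (index_law n T) (\<Union>p\<in>I. A p)"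
    by (rule measure_pmf.finite_measure_mono[OF sub]) simp
  also have "\<dots> \<le> (\<Sum>p\<in>I. measure_pmf.prob (index_law n T) (A p))"
    by (rule measure_pmf.finite_measure_subadditive_finite[OF finI]) simp
  also have "\<dots> \<le> (\<Sum>p\<in>I. exp (- (x^2) / (2 * V)))"
    by (rule sum_mono) (rule each)
  also have "\<dots> = real T * (2 * real DIM('a)) * exp (- (x^2) / (2 * (4 * B^2 * (1 - \<gamma>))))"
    by (simp add: cardI V_def)
  finally show ?thesis .
qed

end


lemma div_helper:
  fixes T e t u D X :: real
  assumes "T \<noteq> 0" "e \<noteq> 0" "t \<noteq> 0" "u \<noteq> 0"
  shows "(2 * e * t * (D / u + T * X)) / (T * e * t) = 2 * D / (T * u) + 2 * X"
  using assms by (simp add: field_simps)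

context sgdm
begin

lemma final_bound:
  fixes F :: "'a \<Rightarrow> real" and js :: "nat \<Rightarrow> nat"
  assumes T: "T \<ge> 1" and g0: "0 \<le> \<gamma>" and g1: "\<gamma> < 1" and t2: "\<tau>2 > 0" and et: "\<eta> > 0" and L: "L \<ge> 0"
    and Fnn: "\<And>w. F w \<ge> 0"
    and Fder: "\<And>w. (F has_derivative (\<lambda>h. DF w \<bullet> h)) (at w)"
    and lip: "\<And>u v. norm (DF u - DF v) \<le> L * norm (u - v)"
    and bias: "\<And>t. 1 \<le> t \<Longrightarrow> t \<le> T \<Longrightarrow> norm (gb js t - DF (W js t)) \<le> b"
    and Zb: "\<And>t. 1 \<le> t \<Longrightarrow> t \<le> T \<Longrightarrow> norm (Z js t) \<le> zb"
  shows "(1 / real T) * (\<Sum>t=1..T. norm (DF (W js t)))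
     \<le> F 0 / (real T * \<eta> * \<tau>2) + 2 * norm (DF 0) / (real T * (1 - \<gamma>)) + 2 * (L * \<eta> * \<tau>2 / (1 - \<gamma>))
       + 2 * b + 2 * zb + \<tau>2 / 4 + L * \<eta> * \<tau>2 / 2"
proof -
  let ?c = "L * \<eta> * \<tau>2 / (1 - \<gamma>)"
  let ?D = "norm (DF 0)"
  have ds: "\<eta> * \<tau>2 * (\<Sum>t=1..T. norm (DF (W js t))) \<le> F (W js 1) - F (W js (Suc T))
     + (\<Sum>t=1..T. 2 * \<eta> * \<tau>2 * norm (M js t - DF (W js t))) + real T * (\<eta> * \<tau>2^2 / 4 + L * \<eta>^2 * \<tau>2^2 / 2)"
    by (rule descent_sum[OF Fder lip L]) (use et t2 in auto)
  have Mt: "norm (M js t - DF (W js t)) \<le> \<gamma>^t * ?D + ?c + b + zb" if t: "t \<in> {1..T}" for t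
  proof -
    obtain k where k: "t = Suc k" using t by (cases t) auto
    have "norm (M js t - DF (W js t) - Z js t) \<le> \<gamma>^t * ?D + ?c + b"
      unfolding k by (rule E_bound[OF g0 g1 L _ _ lip bias]) (use et t2 t k in auto)
    moreover have "norm (M js t - DF (W js t)) \<le> norm (M js t - DF (W js t) - Z js t) + norm (Z js t)"
      using norm_triangle_ineq[of "M js t - DF (W js t) - Z js t" "Z js t"] by simp
    moreover have "norm (Z js t) \<le> zb" using Zb t by auto
    ultimately show ?thesis by linarith
  qed
  have "(\<Sum>t=1..T. norm (M js t - DF (W js t))) \<le> (\<Sum>t=1..T. \<gamma>^t * ?D + (?c + b + zb))"
    by (rule sum_mono) (use Mt in \<open>simp add: add.assoc\<close>)
  also have "\<dots> = ?D * (\<Sum>t=1..T. \<gamma>^t) + real T * (?c + b + zb)"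
    by (simp add: sum.distrib sum_distrib_left mult.commute)
  also have "\<dots> \<le> ?D * (1 / (1 - \<gamma>)) + real T * (?c + b + zb)"
    by (intro add_right_mono mult_left_mono geo_fwd g0 g1) simp
  finally have sM: "(\<Sum>t=1..T. norm (M js t - DF (W js t))) \<le> ?D / (1 - \<gamma>) + real T * (?c + b + zb)" by simp
  have "(\<Sum>t=1..T. 2 * \<eta> * \<tau>2 * norm (M js t - DF (W js t))) = 2 * \<eta> * \<tau>2 * (\<Sum>t=1..T. norm (M js t - DF (W js t)))"
    by (simp add: sum_distrib_left)
  also have "\<dots> \<le> 2 * \<eta> * \<tau>2 * (?D / (1 - \<gamma>) + real T * (?c + b + zb))"
    using sM et t2 by (intro mult_left_mono) auto
  finally have s2: "(\<Sum>t=1..T. 2 * \<eta> * \<tau>2 * norm (M js t - DF (W js t))) \<le> 2 * \<eta> * \<tau>2 * (?D / (1 - \<gamma>) + real T * (?c + b + zb))" .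
  have FW: "F (W js 1) = F 0" by (simp add: W1')
  have main: "\<eta> * \<tau>2 * (\<Sum>t=1..T. norm (DF (W js t))) \<le> F 0 + 2 * \<eta> * \<tau>2 * (?D / (1 - \<gamma>) + real T * (?c + b + zb))
      + real T * (\<eta> * \<tau>2^2 / 4 + L * \<eta>^2 * \<tau>2^2 / 2)"
    using ds s2 Fnn[of "W js (Suc T)"] FW by linarith
  define K where "K = real T * \<eta> * \<tau>2"
  have K: "K > 0" using T et t2 by (simp add: K_def)
  have "(1 / real T) * (\<Sum>t=1..T. norm (DF (W js t))) = (\<eta> * \<tau>2 * (\<Sum>t=1..T. norm (DF (W js t)))) / K"
    using et t2 by (simp add: K_def field_simps)
  also have "\<dots> \<le> (F 0 + 2 * \<eta> * \<tau>2 * (?D / (1 - \<gamma>) + real T * (?c + b + zb))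
      + real T * (\<eta> * \<tau>2^2 / 4 + L * \<eta>^2 * \<tau>2^2 / 2)) / K"
    using main K by (intro divide_right_mono) auto
  also have "\<dots> = F 0 / (real T * \<eta> * \<tau>2) + 2 * ?D / (real T * (1 - \<gamma>)) + 2 * ?c
       + 2 * b + 2 * zb + \<tau>2 / 4 + L * \<eta> * \<tau>2 / 2"
  proof -
    have nz: "real T \<noteq> 0" "\<eta> \<noteq> 0" "\<tau>2 \<noteq> 0" "1 - \<gamma> \<noteq> 0" using T et t2 g1 by auto
    have e1: "(2 * \<eta> * \<tau>2 * (?D / (1 - \<gamma>) + real T * (?c + b + zb))) / K
       = 2 * ?D / (real T * (1 - \<gamma>)) + 2 * ?c + 2 * b + 2 * zb"
      unfolding K_def by (subst div_helper[OF nz]) (simp add: algebra_simps)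
    have e2: "(real T * (\<eta> * \<tau>2^2 / 4 + L * \<eta>^2 * \<tau>2^2 / 2)) / K = \<tau>2 / 4 + L * \<eta> * \<tau>2 / 2"
      using nz unfolding K_def by (simp add: field_simps power2_eq_square)
    show ?thesis by (simp only: add_divide_distrib e1 e2) (simp add: K_def)
  qed
  finally show ?thesis .
qed

end


lemma ln2_half: "ln (2::real) \<ge> 1/2" using ln2_ge_two_thirds by simp

lemma arith_final:
  fixes T :: nat and \<alpha> \<delta> s q r p G L F0 D0 B d \<gamma> \<tau>1 \<eta> \<tau>2 :: real
  assumes \<alpha>: "1 < \<alpha>" "\<alpha> \<le> 2" and T: "T \<ge> 2" and \<delta>: "0 < \<delta>" "\<delta> < 1"
    and pos: "s > 0" "q > 0" "r > 0" "p > 0" "G > 0"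
    and L: "L \<ge> 0" and F0: "F0 \<ge> 0" and D0: "D0 \<ge> 0" and B: "B \<ge> 1" and d: "d \<ge> 1"
    and \<gamma>_def: "\<gamma> = 1 - s * real T powr (- \<alpha> / (3 * \<alpha> - 2))"
    and \<tau>1_def: "\<tau>1 = p * G / (1 - \<gamma>) powr (1 / \<alpha>)"
    and \<eta>_def: "\<eta> = q * real T powr (- \<alpha> / (3 * \<alpha> - 2))"
    and \<tau>2_def: "\<tau>2 = r * real T powr (- (\<alpha> - 1) / (3 * \<alpha> - 2))"
  shows "F0 / (real T * \<eta> * \<tau>2) + 2 * D0 / (real T * (1 - \<gamma>)) + 2 * (L * \<eta> * \<tau>2 / (1 - \<gamma>))
       + 2 * (G powr \<alpha> / \<tau>1 powr (\<alpha> - 1)) + 2 * (d * sqrt (2 * (4 * B^2 * (1 - \<gamma>)) * ln (2 * d * real T / \<delta>)))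
       + \<tau>2 / 4 + L * \<eta> * \<tau>2 / 2
     \<le> (2 * (F0 / (q * r) + 2 * D0 / s + 2 * (L * q * r / s) + 2 * (G * p powr (1 - \<alpha>) * s powr ((\<alpha> - 1) / \<alpha>))
           + r / 4 + L * q * r / 2) + 2 * d * B * sqrt (8 * s) * (2 * ln (2 * d) + 1))
        * ln (real T / \<delta>) / real T powr ((\<alpha> - 1) / (3 * \<alpha> - 2))"
proof -
  define a where "a = \<alpha> / (3 * \<alpha> - 2)"
  define \<beta> where "\<beta> = (\<alpha> - 1) / (3 * \<alpha> - 2)"
  have den: "3 * \<alpha> - 2 > 0" using \<alpha> by simp
  have Tpos: "real T > 0" and T1: "real T \<ge> 1" using T by auto
  define P where "P = real T powr \<beta>"
  define Q where "Q = real T powr a"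
  have b0: "\<beta> > 0" using \<alpha> den by (simp add: \<beta>_def)
  have P1: "P \<ge> 1" unfolding P_def using T1 b0 by (intro ge_one_powr_ge_zero) auto
  have P0: "P > 0" using P1 by simp
  have Q0: "Q > 0" unfolding Q_def using Tpos by simp
  have sum1: "a + \<beta> + \<beta> = 1"
  proof -
    have "a + \<beta> + \<beta> = (\<alpha> + (\<alpha> - 1) + (\<alpha> - 1)) / (3 * \<alpha> - 2)"
      by (simp only: a_def \<beta>_def add_divide_distrib)
    also have "\<dots> = 1" using den by simp
    finally show ?thesis .
  qed
  have TQP: "real T = Q * P * P"
  proof -
    have "real T = real T powr (a + \<beta> + \<beta>)" using sum1 Tpos by simp
    also have "\<dots> = Q * P * P" unfolding P_def Q_def by (simp only: powr_add)
    finally show ?thesis .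
  qed
  have PPQ: "P * P \<le> Q"
  proof -
    have "2 * \<beta> \<le> a" using \<alpha> den by (simp add: a_def \<beta>_def divide_right_mono)
    hence "real T powr (\<beta> + \<beta>) \<le> real T powr a" using T1 by (intro powr_mono) auto
    thus ?thesis unfolding P_def Q_def by (simp only: powr_add)
  qed
  have PQ: "P \<le> Q" using PPQ P1 by (smt (verit) mult_le_cancel_left1)
  have Q1: "Q \<ge> 1" using PQ P1 by simp
  have ea: "real T powr (- \<alpha> / (3 * \<alpha> - 2)) = 1 / Q"
    unfolding Q_def a_def by (simp add: powr_minus divide_inverse)
  have eb: "real T powr (- (\<alpha> - 1) / (3 * \<alpha> - 2)) = 1 / P"
  proof -
    have "- (\<alpha> - 1) / (3 * \<alpha> - 2) = - \<beta>" unfolding \<beta>_def by (simp add: minus_divide_left)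
    thus ?thesis unfolding P_def by (simp add: powr_minus divide_inverse)
  qed
  have g: "1 - \<gamma> = s / Q" unfolding \<gamma>_def ea by simp
  have et: "\<eta> = q / Q" unfolding \<eta>_def ea by simp
  have t2: "\<tau>2 = r / P" unfolding \<tau>2_def eb by simp
  have pq: "P \<noteq> 0" "Q \<noteq> 0" using P0 Q0 by auto
  have e1: "F0 / (real T * \<eta> * \<tau>2) = (F0 / (q * r)) / P"
    unfolding TQP et t2 using pq pos by (simp add: field_simps)
  have e2: "2 * D0 / (real T * (1 - \<gamma>)) \<le> (2 * D0 / s) / P"
  proof -
    have "2 * D0 / (real T * (1 - \<gamma>)) = (2 * D0 / s) / (P * P)"
      unfolding TQP g using pq pos by (simp add: field_simps)
    also have "\<dots> \<le> (2 * D0 / s) / P"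
      using P1 D0 pos by (intro divide_left_mono) (auto simp: mult_le_cancel_left1)
    finally show ?thesis .
  qed
  have e3: "2 * (L * \<eta> * \<tau>2 / (1 - \<gamma>)) = 2 * (L * q * r / s) / P"
    unfolding et t2 g using pq pos by (simp add: field_simps)
  have e4: "G powr \<alpha> / \<tau>1 powr (\<alpha> - 1) = (G * p powr (1 - \<alpha>) * s powr ((\<alpha> - 1) / \<alpha>)) / P"
  proof -
    have gs: "1 - \<gamma> > 0" unfolding g using pos Q0 by simp
    have "\<tau>1 powr (\<alpha> - 1) = (p * G) powr (\<alpha> - 1) / ((1 - \<gamma>) powr (1 / \<alpha>)) powr (\<alpha> - 1)"
      unfolding \<tau>1_def using pos gs by (simp add: powr_divide)
    also have "((1 - \<gamma>) powr (1 / \<alpha>)) powr (\<alpha> - 1) = (1 - \<gamma>) powr ((\<alpha> - 1) / \<alpha>)"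
      by (simp add: powr_powr)
    also have "(1 - \<gamma>) powr ((\<alpha> - 1) / \<alpha>) = s powr ((\<alpha> - 1) / \<alpha>) / P"
    proof -
      have "Q powr ((\<alpha> - 1) / \<alpha>) = P"
      proof -
        have "a * ((\<alpha> - 1) / \<alpha>) = \<beta>" using \<alpha> den by (simp add: a_def \<beta>_def)
        thus ?thesis unfolding Q_def P_def by (simp add: powr_powr)
      qed
      thus ?thesis unfolding g using pos Q0 by (simp add: powr_divide)
    qed
    finally have t1e: "\<tau>1 powr (\<alpha> - 1) = (p * G) powr (\<alpha> - 1) / (s powr ((\<alpha> - 1) / \<alpha>) / P)" .
    have m1: "(p * G) powr (\<alpha> - 1) = p powr (\<alpha> - 1) * G powr (\<alpha> - 1)"
      using pos by (simp add: powr_mult)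
    have m2: "G powr \<alpha> = G * G powr (\<alpha> - 1)"
      using pos by (simp add: powr_diff powr_one)
    have m3: "p powr (1 - \<alpha>) = 1 / p powr (\<alpha> - 1)"
      using pos by (simp add: powr_diff powr_one powr_minus_divide)
    have nz: "p powr (\<alpha> - 1) \<noteq> 0" "G powr (\<alpha> - 1) \<noteq> 0" "s powr ((\<alpha> - 1) / \<alpha>) \<noteq> 0" "P \<noteq> 0"
      using pos P0 by auto
    show ?thesis unfolding t1e m1 m2 m3 using nz by (simp add: field_simps)
  qed
  define lt where "lt = ln (real T / \<delta>)"
  define lq where "lq = ln (2 * d * real T / \<delta>)"
  have l2: "lt \<ge> ln 2"
    unfolding lt_def using T \<delta> by (intro ln_mono) (auto simp: le_divide_eq)
  hence lh: "lt \<ge> 1/2" using ln2_half by linarith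
  have l'eq: "lq = ln (2 * d) + lt"
    proof -
    have "2 * d * real T / \<delta> = (2 * d) * (real T / \<delta>)" by simp
    moreover have "2 * d > 0" "real T / \<delta> > 0" using d T \<delta> by auto
    moreover have "ln ((2 * d) * (real T / \<delta>)) = ln (2 * d) + ln (real T / \<delta>)"
      by (rule ln_mult_pos) (use d T \<delta> in auto)
    ultimately show ?thesis unfolding lq_def lt_def by simp
  qed
  have ld: "ln (2 * d) \<ge> 0" using d by simp
  have l'1: "lq \<ge> 1"
  proof -
    have "ln (2 * d) \<ge> ln 2" using d by (intro ln_mono) auto
    thus ?thesis using l'eq lh ln2_half by linarith
  qed
  have e5: "2 * (d * sqrt (2 * (4 * B^2 * (1 - \<gamma>)) * lq)) \<le> (2 * d * B * sqrt (8 * s) * (2 * ln (2 * d) + 1) * lt) / P"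
  proof -
    have "sqrt (2 * (4 * B^2 * (1 - \<gamma>)) * lq) = B * sqrt (8 * s) * sqrt lq / sqrt Q"
      unfolding g using B pos Q0 by (simp add: real_sqrt_mult real_sqrt_divide)
    also have "\<dots> \<le> B * sqrt (8 * s) * sqrt lq / P"
    proof -
      have "P \<le> sqrt Q" using PPQ P0 by (simp add: real_le_rsqrt power2_eq_square)
      moreover have "sqrt Q * P > 0" using Q0 P0 by simp
      ultimately show ?thesis using B pos P0 l'1 by (intro divide_left_mono) auto
    qed
    also have "\<dots> \<le> B * sqrt (8 * s) * ((2 * ln (2 * d) + 1) * lt) / P"
    proof -
      have s1: "1 \<le> sqrt lq" using l'1 by simp
      have "sqrt lq * 1 \<le> sqrt lq * sqrt lq" by (rule mult_left_mono[OF s1]) (use l'1 in simp)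
      hence "sqrt lq \<le> lq" using l'1 by simp
      also have "lq \<le> (2 * ln (2 * d) + 1) * lt"
      proof -
        have "1 * ln (2 * d) \<le> (2 * lt) * ln (2 * d)" by (rule mult_right_mono) (use lh ld in auto)
        moreover have "(2 * ln (2 * d) + 1) * lt = (2 * lt) * ln (2 * d) + lt" by (simp add: algebra_simps)
        ultimately show ?thesis using l'eq by linarith
      qed
      finally have "sqrt lq \<le> (2 * ln (2 * d) + 1) * lt" .
      thus ?thesis using B pos P0 by (intro divide_right_mono mult_left_mono) auto
    qed
    finally have X: "sqrt (2 * (4 * B^2 * (1 - \<gamma>)) * lq) \<le> B * sqrt (8 * s) * ((2 * ln (2 * d) + 1) * lt) / P" .
    have "2 * (d * sqrt (2 * (4 * B^2 * (1 - \<gamma>)) * lq)) \<le> 2 * (d * (B * sqrt (8 * s) * ((2 * ln (2 * d) + 1) * lt) / P))"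
      using X d by (intro mult_left_mono) auto
    also have "\<dots> = (2 * d * B * sqrt (8 * s) * (2 * ln (2 * d) + 1) * lt) / P" by (simp add: field_simps)
    finally show ?thesis .
  qed
  have e6: "\<tau>2 / 4 = (r / 4) / P" unfolding t2 by simp
  have e7: "L * \<eta> * \<tau>2 / 2 \<le> (L * q * r / 2) / P"
  proof -
    have "L * \<eta> * \<tau>2 / 2 = (L * q * r / 2) / P / Q" unfolding et t2 by (simp add: field_simps)
    also have "\<dots> \<le> (L * q * r / 2) / P"
      using divide_left_mono[of 1 Q "L * q * r / 2 / P"] Q1 L pos P0 by simp
    finally show ?thesis .
  qed
  define K0 where "K0 = F0 / (q * r) + 2 * D0 / s + 2 * (L * q * r / s) + 2 * (G * p powr (1 - \<alpha>) * s powr ((\<alpha> - 1) / \<alpha>))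
           + r / 4 + L * q * r / 2"
  have K0: "K0 \<ge> 0" unfolding K0_def using pos L F0 D0 by simp
  have "F0 / (real T * \<eta> * \<tau>2) + 2 * D0 / (real T * (1 - \<gamma>)) + 2 * (L * \<eta> * \<tau>2 / (1 - \<gamma>))
       + 2 * (G powr \<alpha> / \<tau>1 powr (\<alpha> - 1)) + 2 * (d * sqrt (2 * (4 * B^2 * (1 - \<gamma>)) * lq))
       + \<tau>2 / 4 + L * \<eta> * \<tau>2 / 2
     \<le> K0 / P + (2 * d * B * sqrt (8 * s) * (2 * ln (2 * d) + 1) * lt) / P"
  proof -
    have hK: "K0 / P = F0 / (q * r) / P + (2 * D0 / s) / P + 2 * (L * q * r / s) / P
       + 2 * ((G * p powr (1 - \<alpha>) * s powr ((\<alpha> - 1) / \<alpha>)) / P) + (r / 4) / P + (L * q * r / 2) / P"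
      unfolding K0_def using pq by (simp add: field_simps)
    show ?thesis using e1 e2 e3 e4 e5 e6 e7 hK by linarith
  qed
  also have "\<dots> \<le> (2 * K0 * lt) / P + (2 * d * B * sqrt (8 * s) * (2 * ln (2 * d) + 1) * lt) / P"
  proof -
    have "K0 * 1 \<le> K0 * (2 * lt)" by (rule mult_left_mono) (use K0 lh in auto)
    hence "K0 \<le> 2 * K0 * lt" by (simp add: algebra_simps)
    thus ?thesis using P0 by (simp add: divide_right_mono)
  qed
  also have "\<dots> = (2 * K0 + 2 * d * B * sqrt (8 * s) * (2 * ln (2 * d) + 1)) * lt / P"
    by (simp only: add_divide_distrib[symmetric] distrib_right)
  finally show ?thesis unfolding K0_def lt_def lq_def P_def \<beta>_def .
qed



definition Cconst :: "('a::euclidean_space \<Rightarrow> 'z \<Rightarrow> real) \<Rightarrow> ('a \<Rightarrow> 'z \<Rightarrow> 'a) \<Rightarrow> (nat \<Rightarrow> 'z) \<Rightarrow> nat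
    \<Rightarrow> real \<Rightarrow> real \<Rightarrow> real \<Rightarrow> real \<Rightarrow> real \<Rightarrow> real \<Rightarrow> real \<Rightarrow> real" where
  "Cconst f gf zs n L \<alpha> G p s q r =
    2 * ((1 / real n) * (\<Sum>i=1..n. f 0 (zs i)) / (q * r) + 2 * norm ((1 / real n) *\<^sub>R (\<Sum>i=1..n. gf 0 (zs i))) / s
      + 2 * (\<bar>L\<bar> * q * r / s) + 2 * (G * p powr (1 - \<alpha>) * s powr ((\<alpha> - 1) / \<alpha>)) + r / 4 + \<bar>L\<bar> * q * r / 2)
    + 2 * real DIM('a) * max 1 (real n * G powr \<alpha>) * sqrt (8 * s) * (2 * ln (2 * real DIM('a)) + 1)"

lemma main_fixed:
  fixes f :: "'a::euclidean_space \<Rightarrow> 'z \<Rightarrow> real"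
    and gf :: "'a \<Rightarrow> 'z \<Rightarrow> 'a"
    and zs :: "nat \<Rightarrow> 'z"
    and n :: nat
    and L \<alpha> G p s q r :: real and T :: nat and \<delta> \<gamma> \<tau>1 \<eta> \<tau>2 :: real
  assumes n_pos: "n \<ge> 1"
    and f_nonneg: "\<And>w z. f w z \<ge> 0"
    and f_grad: "\<And>w z. ((\<lambda>v. f v z) has_derivative (\<lambda>h. gf w z \<bullet> h)) (at w)"
    and smooth: "\<And>u v. norm ((1 / real n) *\<^sub>R (\<Sum>i=1..n. gf u (zs i))
                          - (1 / real n) *\<^sub>R (\<Sum>i=1..n. gf v (zs i))) \<le> L * norm (u - v)"
    and alpha: "1 < \<alpha>" "\<alpha> \<le> 2"
    and G_pos: "G > 0"
    and params_pos: "p > 0" "s > 0" "q > 0" "r > 0"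
    and T2: "T \<ge> 2" and \<delta>0: "0 < \<delta>" and \<delta>1: "\<delta> < 1"
    and \<gamma>_def: "\<gamma> = 1 - s * real T powr (- \<alpha> / (3 * \<alpha> - 2))"
    and \<tau>1_def: "\<tau>1 = p * G / (1 - \<gamma>) powr (1 / \<alpha>)"
    and \<eta>_def: "\<eta> = q * real T powr (- \<alpha> / (3 * \<alpha> - 2))"
    and \<tau>2_def: "\<tau>2 = r * real T powr (- (\<alpha> - 1) / (3 * \<alpha> - 2))"
    and g1: "1 - \<gamma> \<le> 1"
    and hyp: "\<forall>js \<in> set_pmf (index_law n T). \<forall>t \<in> {1..T}.
            measure_pmf.expectation (pmf_of_set {1..n}) (\<lambda>j. norm (gf (sgdm_iter gf zs \<gamma> \<tau>1 \<tau>2 (\<lambda>t. \<eta>) js t) (zs j)) powr \<alpha>)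
              \<le> G powr \<alpha>"
  shows "measure_pmf.prob (index_law n T)
           {js. (1 / real T) * (\<Sum>t=1..T. norm ((1 / real n) *\<^sub>R (\<Sum>i=1..n. gf (sgdm_iter gf zs \<gamma> \<tau>1 \<tau>2 (\<lambda>t. \<eta>) js t) (zs i))))
                \<le> Cconst f gf zs n L \<alpha> G p s q r * ln (real T / \<delta>) / real T powr ((\<alpha> - 1) / (3 * \<alpha> - 2))}
           \<ge> 1 - \<delta>"
proof -
  interpret S: sgdm gf zs n \<gamma> \<tau>1 \<tau>2 \<eta> .
  define F where "F w = (1 / real n) * (\<Sum>i=1..n. f w (zs i))" for w
  define d where "d = real DIM('a)"
  define B where "B = max 1 (real n * G powr \<alpha>)"
  define L' where "L' = \<bar>L\<bar>"
  have d1: "d \<ge> 1" unfolding d_def using DIM_positive[where 'a='a] by linarith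
  have B1: "B \<ge> 1" unfolding B_def by simp
  have L': "L' \<ge> 0" unfolding L'_def by simp
  have Tpos: "real T > 0" using T2 by simp
  have g0: "0 \<le> \<gamma>" using g1 by simp
  have g1': "\<gamma> < 1" unfolding \<gamma>_def using params_pos Tpos by simp
  have gs: "1 - \<gamma> > 0" using g1' by simp
  have t1: "\<tau>1 > 0" unfolding \<tau>1_def using params_pos G_pos gs by simp
  have et: "\<eta> > 0" unfolding \<eta>_def using params_pos Tpos by simp
  have t2: "\<tau>2 > 0" unfolding \<tau>2_def using params_pos Tpos by simp
  have Witer: "sgdm_iter gf zs \<gamma> \<tau>1 \<tau>2 (\<lambda>t. \<eta>) js t = S.W js t" for js t by (simp add: S.W_iter)
  have lip: "norm (S.DF u - S.DF v) \<le> L' * norm (u - v)" for u v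
  proof -
    have "norm (S.DF u - S.DF v) \<le> L * norm (u - v)" using smooth[of u v] by (simp add: S.DF_def)
    also have "\<dots> \<le> L' * norm (u - v)" unfolding L'_def by (intro mult_right_mono) auto
    finally show ?thesis .
  qed
  have Fder: "(F has_derivative (\<lambda>h. S.DF w \<bullet> h)) (at w)" for w
  proof -
    have "((\<lambda>v. (1 / real n) * (\<Sum>i=1..n. f v (zs i))) has_derivative (\<lambda>h. (1 / real n) * (\<Sum>i=1..n. gf w (zs i) \<bullet> h))) (at w)"
      by (intro has_derivative_mult_right has_derivative_sum f_grad)
    moreover have "(\<lambda>h. (1 / real n) * (\<Sum>i=1..n. gf w (zs i) \<bullet> h)) = (\<lambda>h. S.DF w \<bullet> h)"
      by (simp add: S.DF_def fun_eq_iff inner_sum_left)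
    ultimately show ?thesis unfolding F_def by simp
  qed
  have Fnn: "F w \<ge> 0" for w unfolding F_def by (simp add: f_nonneg sum_nonneg)
  have ne: "{1..n} \<noteq> {}" using n_pos by simp
  have hyp': "(\<Sum>j\<in>{1..n}. norm (gf (S.W js t) (zs j)) powr \<alpha>) / real n \<le> G powr \<alpha>"
    if "js \<in> set_pmf (index_law n T)" "t \<in> {1..T}" for js t
    using hyp that ne by (simp add: integral_pmf_of_set Witer)
  have bound: "norm (gf (S.W js t) (zs j)) \<le> B"
    if js: "js \<in> set_pmf (index_law n T)" and t: "t \<in> {1..T}" and j: "j \<in> {1..n}" for js t j
  proof -
    let ?v = "\<lambda>j. norm (gf (S.W js t) (zs j)) powr \<alpha>"
    have "?v j \<le> (\<Sum>j\<in>{1..n}. ?v j)" using j by (intro member_le_sum) auto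
    also have "\<dots> \<le> real n * G powr \<alpha>" using hyp'[OF js t] n_pos by (simp add: divide_le_eq mult.commute)
    finally have vj: "?v j \<le> real n * G powr \<alpha>" .
    show ?thesis
    proof (cases "norm (gf (S.W js t) (zs j)) \<le> 1")
      case True thus ?thesis using B1 by simp
    next
      case False
      hence "norm (gf (S.W js t) (zs j)) = norm (gf (S.W js t) (zs j)) powr 1" by simp
      also have "\<dots> \<le> ?v j" using False alpha by (intro powr_mono) auto
      finally show ?thesis using vj unfolding B_def by simp
    qed
  qed
  define bb where "bb = G powr \<alpha> / \<tau>1 powr (\<alpha> - 1)"
  have bias: "norm (S.gb js t - S.DF (S.W js t)) \<le> bb"
    if js: "js \<in> set_pmf (index_law n T)" and t: "1 \<le> t" "t \<le> T" for js t
  proof -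
    have "S.gb js t - S.DF (S.W js t) = (1 / real n) *\<^sub>R (\<Sum>j=1..n. clip \<tau>1 (gf (S.W js t) (zs j)) - gf (S.W js t) (zs j))"
      by (simp add: S.gb_def S.DF_def sum_subtractf scaleR_diff_right)
    hence "norm (S.gb js t - S.DF (S.W js t)) \<le> (1 / real n) * (\<Sum>j=1..n. norm (clip \<tau>1 (gf (S.W js t) (zs j)) - gf (S.W js t) (zs j)))"
      by (simp add: divide_right_mono norm_sum)
    also have "\<dots> \<le> (1 / real n) * (\<Sum>j=1..n. norm (gf (S.W js t) (zs j)) powr \<alpha> / \<tau>1 powr (\<alpha> - 1))"
      by (intro mult_left_mono sum_mono clip_err t1 alpha) auto
    also have "\<dots> = ((\<Sum>j\<in>{1..n}. norm (gf (S.W js t) (zs j)) powr \<alpha>) / real n) / \<tau>1 powr (\<alpha> - 1)"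
      by (simp add: sum_divide_distrib[symmetric])
    also have "\<dots> \<le> G powr \<alpha> / \<tau>1 powr (\<alpha> - 1)"
      using hyp'[OF js] t t1 by (intro divide_right_mono) auto
    finally show ?thesis unfolding bb_def .
  qed
  define lq where "lq = ln (2 * d * real T / \<delta>)"
  have lq0: "lq > 0"
  proof -
    have "2 * d * real T \<ge> 2 * 1 * 1" using d1 T2 by (intro mult_mono) auto
    hence "\<delta> < 2 * d * real T" using \<delta>1 by linarith
    thus ?thesis unfolding lq_def using \<delta>0 by (simp add: less_divide_eq)
  qed
  define V where "V = 4 * B^2 * (1 - \<gamma>)"
  have V0: "V > 0" unfolding V_def using B1 gs by simp
  define x where "x = sqrt (2 * V * lq)"
  have x0: "x > 0" unfolding x_def using V0 lq0 by simp
  define bad where "bad = {js. \<exists>t\<in>{1..T}. \<exists>b\<in>(Basis::'a set). \<bar>S.Z js t \<bullet> b\<bar> \<ge> x}"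
  have pbad: "measure_pmf.prob (index_law n T) bad \<le> \<delta>"
  proof -
    have "measure_pmf.prob (index_law n T) bad \<le> real T * (2 * d) * exp (- (x^2) / (2 * V))"
      unfolding bad_def d_def V_def
      by (rule S.Z_conc[OF n_pos g0 g1' _ _ bound x0]) (use t1 B1 in auto)
    also have "exp (- (x^2) / (2 * V)) = exp (- lq)"
      unfolding x_def using V0 lq0 by simp
    also have "exp (- lq) = \<delta> / (2 * d * real T)"
      unfolding lq_def using d1 T2 \<delta>0 by (simp add: exp_minus)
    also have "real T * (2 * d) * (\<delta> / (2 * d * real T)) = \<delta>"
      using d1 Tpos by (simp add: field_simps)
    finally show ?thesis .
  qed
  define target where "target = {js. (1 / real T) * (\<Sum>t=1..T. norm ((1 / real n) *\<^sub>R (\<Sum>i=1..n. gf (sgdm_iter gf zs \<gamma> \<tau>1 \<tau>2 (\<lambda>t. \<eta>) js t) (zs i))))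
                \<le> Cconst f gf zs n L \<alpha> G p s q r * ln (real T / \<delta>) / real T powr ((\<alpha> - 1) / (3 * \<alpha> - 2))}"
  have good: "js \<in> target" if js: "js \<in> set_pmf (index_law n T)" and nb: "js \<notin> bad" for js
  proof -
    have Zb: "norm (S.Z js t) \<le> d * x" if t: "1 \<le> t" "t \<le> T" for t
    proof -
      have "norm (S.Z js t) \<le> (\<Sum>b\<in>(Basis::'a set). \<bar>S.Z js t \<bullet> b\<bar>)" by (rule norm_le_l1)
      also have "\<dots> \<le> (\<Sum>b\<in>(Basis::'a set). x)"
        using nb t unfolding bad_def by (intro sum_mono) force
      also have "\<dots> = d * x" by (simp add: d_def)
      finally show ?thesis .
    qed
    have "(1 / real T) * (\<Sum>t=1..T. norm (S.DF (S.W js t)))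
      \<le> F 0 / (real T * \<eta> * \<tau>2) + 2 * norm (S.DF 0) / (real T * (1 - \<gamma>)) + 2 * (L' * \<eta> * \<tau>2 / (1 - \<gamma>))
       + 2 * bb + 2 * (d * x) + \<tau>2 / 4 + L' * \<eta> * \<tau>2 / 2"
      by (rule S.final_bound[OF _ g0 g1' t2 et L' Fnn Fder lip bias Zb]) (use T2 js in auto)
    also have "\<dots> \<le> Cconst f gf zs n L \<alpha> G p s q r * ln (real T / \<delta>) / real T powr ((\<alpha> - 1) / (3 * \<alpha> - 2))"
    proof -
      have "F 0 / (real T * \<eta> * \<tau>2) + 2 * norm (S.DF 0) / (real T * (1 - \<gamma>)) + 2 * (L' * \<eta> * \<tau>2 / (1 - \<gamma>))
       + 2 * (G powr \<alpha> / \<tau>1 powr (\<alpha> - 1)) + 2 * (d * sqrt (2 * (4 * B^2 * (1 - \<gamma>)) * ln (2 * d * real T / \<delta>)))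
       + \<tau>2 / 4 + L' * \<eta> * \<tau>2 / 2
     \<le> (2 * (F 0 / (q * r) + 2 * norm (S.DF 0) / s + 2 * (L' * q * r / s) + 2 * (G * p powr (1 - \<alpha>) * s powr ((\<alpha> - 1) / \<alpha>))
           + r / 4 + L' * q * r / 2) + 2 * d * B * sqrt (8 * s) * (2 * ln (2 * d) + 1))
        * ln (real T / \<delta>) / real T powr ((\<alpha> - 1) / (3 * \<alpha> - 2))"
        by (rule arith_final[OF alpha T2 \<delta>0 \<delta>1 params_pos(2,3,4,1) G_pos L' Fnn _ B1 d1 \<gamma>_def \<tau>1_def \<eta>_def \<tau>2_def]) simp
      moreover have "(2 * (F 0 / (q * r) + 2 * norm (S.DF 0) / s + 2 * (L' * q * r / s) + 2 * (G * p powr (1 - \<alpha>) * s powr ((\<alpha> - 1) / \<alpha>))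
           + r / 4 + L' * q * r / 2) + 2 * d * B * sqrt (8 * s) * (2 * ln (2 * d) + 1)) = Cconst f gf zs n L \<alpha> G p s q r"
        by (simp add: Cconst_def F_def S.DF_def d_def B_def L'_def)
      ultimately show ?thesis unfolding bb_def x_def V_def lq_def by simp
    qed
    finally show ?thesis unfolding target_def by (simp add: Witer S.DF_def)
  qed
  have "(UNIV - bad) \<inter> set_pmf (index_law n T) \<subseteq> target" using good by blast
  hence "measure_pmf.prob (index_law n T) ((UNIV - bad) \<inter> set_pmf (index_law n T)) \<le> measure_pmf.prob (index_law n T) target"
    by (intro measure_pmf.finite_measure_mono) auto
  moreover have "measure_pmf.prob (index_law n T) ((UNIV - bad) \<inter> set_pmf (index_law n T)) = measure_pmf.prob (index_law n T) (UNIV - bad)"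
    by (rule measure_Int_set_pmf)
  moreover have "measure_pmf.prob (index_law n T) (UNIV - bad) = 1 - measure_pmf.prob (index_law n T) bad"
    using measure_pmf.prob_compl[where A=bad] by simp
  ultimately show ?thesis using pbad unfolding target_def by linarith
qed


theorem theorem9:
  fixes f :: "'a::euclidean_space \<Rightarrow> 'z \<Rightarrow> real"
    and gf :: "'a \<Rightarrow> 'z \<Rightarrow> 'a"
    and zs :: "nat \<Rightarrow> 'z"
    and n :: nat
    and L \<alpha> G p s q r :: real
  assumes n_pos: "n \<ge> 1"
    and f_nonneg: "\<And>w z. f w z \<ge> 0"
    and f_grad: "\<And>w z. ((\<lambda>v. f v z) has_derivative (\<lambda>h. gf w z \<bullet> h)) (at w)"
    and smooth: "\<And>u v. norm ((1 / real n) *\<^sub>R (\<Sum>i=1..n. gf u (zs i))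
                          - (1 / real n) *\<^sub>R (\<Sum>i=1..n. gf v (zs i))) \<le> L * norm (u - v)"
    and alpha: "1 < \<alpha>" "\<alpha> \<le> 2"
    and G_pos: "G > 0"
    and params_pos: "p > 0" "s > 0" "q > 0" "r > 0"
  shows "\<exists>C. \<forall>T::nat. \<forall>\<delta>::real. T \<ge> 2 \<longrightarrow> 0 < \<delta> \<longrightarrow> \<delta> < 1 \<longrightarrow>
     (let \<gamma> = 1 - s * real T powr (- \<alpha> / (3 * \<alpha> - 2));
          \<tau>1 = p * G / (1 - \<gamma>) powr (1 / \<alpha>);
          \<eta> = (\<lambda>t::nat. q * real T powr (- \<alpha> / (3 * \<alpha> - 2)));
          \<tau>2 = r * real T powr (- (\<alpha> - 1) / (3 * \<alpha> - 2));
          w = sgdm_iter gf zs \<gamma> \<tau>1 \<tau>2 \<eta>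
      in 1 - \<gamma> \<le> 1 \<longrightarrow>
         (\<forall>js \<in> set_pmf (index_law n T). \<forall>t \<in> {1..T}.
            measure_pmf.expectation (pmf_of_set {1..n}) (\<lambda>j. norm (gf (w js t) (zs j)) powr \<alpha>)
              \<le> G powr \<alpha>) \<longrightarrow>
         measure_pmf.prob (index_law n T)
           {js. (1 / real T) * (\<Sum>t=1..T. norm ((1 / real n) *\<^sub>R (\<Sum>i=1..n. gf (w js t) (zs i))))
                \<le> C * ln (real T / \<delta>) / real T powr ((\<alpha> - 1) / (3 * \<alpha> - 2))}
           \<ge> 1 - \<delta>)"
proof -
  show ?thesis
  proof (rule exI[of _ "Cconst f gf zs n L \<alpha> G p s q r"], intro allI impI)
    fix T :: nat and \<delta> :: real
    assume T2: "T \<ge> 2" and \<delta>0: "0 < \<delta>" and \<delta>1: "\<delta> < 1"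
    show "let \<gamma> = 1 - s * real T powr (- \<alpha> / (3 * \<alpha> - 2));
          \<tau>1 = p * G / (1 - \<gamma>) powr (1 / \<alpha>);
          \<eta> = (\<lambda>t::nat. q * real T powr (- \<alpha> / (3 * \<alpha> - 2)));
          \<tau>2 = r * real T powr (- (\<alpha> - 1) / (3 * \<alpha> - 2));
          w = sgdm_iter gf zs \<gamma> \<tau>1 \<tau>2 \<eta>
      in 1 - \<gamma> \<le> 1 \<longrightarrow>
         (\<forall>js \<in> set_pmf (index_law n T). \<forall>t \<in> {1..T}.
            measure_pmf.expectation (pmf_of_set {1..n}) (\<lambda>j. norm (gf (w js t) (zs j)) powr \<alpha>)
              \<le> G powr \<alpha>) \<longrightarrow>
         measure_pmf.prob (index_law n T)
           {js. (1 / real T) * (\<Sum>t=1..T. norm ((1 / real n) *\<^sub>R (\<Sum>i=1..n. gf (w js t) (zs i))))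
                \<le> Cconst f gf zs n L \<alpha> G p s q r * ln (real T / \<delta>) / real T powr ((\<alpha> - 1) / (3 * \<alpha> - 2))}
           \<ge> 1 - \<delta>"
      unfolding Let_def
      apply (intro impI)
      apply (rule main_fixed[where f=f and gf=gf and zs=zs and n=n and L=L and \<alpha>=\<alpha> and G=G and p=p and s=s
               and q=q and r=r and T=T and \<delta>=\<delta>])
      apply (assumption | rule refl n_pos f_nonneg f_grad smooth alpha G_pos params_pos T2 \<delta>0 \<delta>1)+
      done
  qed
qed

end
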